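(* Let $d\neq1,3$ be a positive square-free integer, $K=\mathbb{Q}(\sqrt{-d})$ with ring of integers $\mathcal{O}$, and let $\mathcal{J}$ be the set of proper nonzero ideals $\pi$ of $\mathcal{O}$ with $\pi,\overline\pi$ coprime and $\pi^2$ principal. For $\pi\in\mathcal{J}$ let $a(\pi)>0$ and $b(\pi)$ be the unique integers such that $a(\pi)+b(\pi)\sqrt{-d}$ generates the ideal $2\pi^2$, and set $\theta(\pi)=(N_{K/\mathbb{Q}}(\pi),a(\pi),b(\pi))$. Consider the equation $(\mathcal{E})$: $4n^2=a^2+db^2$ with integers $n>0$, $a>0$, $b\neq0$; a solution is primitive if $\gcd(n,a)=1$. Then $\theta$ is a bijection from $\mathcal{J}$ onto the set of primitive solutions of $(\mathcal{E})$. In particular $$F(d)=\min\{n : (n,a,b)\text{ is a solution of }(\mathcal{E})\}.$$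
   Context: $F(d)=\min_{z\in K_1\setminus R}d(z)$, where $R$ is the set of roots of unity in $K$, $K_1=\{z\in K: z\overline z=1\}$, and for $z\in K^*$, $d(z)=N_{K/\mathbb{Q}}(\pi_z)$ with $\pi_z=\{a\in\mathcal{O}: az\in\mathcal{O}\}$. *)

theory Defs
  imports Complex_Main "HOL-Computational_Algebra.Polynomial" "HOL-Computational_Algebra.Squarefree"
begin

text \<open>Model the imaginary quadratic field K = Q(sqrt(-d)) as a subset of the complex numbers,
  with sqrt(-d) = i * sqrt d.\<close>

definition sqm :: "nat \<Rightarrow> complex" where
  "sqm d = \<i> * complex_of_real (sqrt (real d))"

definition QF :: "nat \<Rightarrow> complex set" where
  "QF d = {complex_of_real x + complex_of_real y * sqm d | x y. x \<in> \<rat> \<and> y \<in> \<rat>}"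

definition OK :: "nat \<Rightarrow> complex set" where
  "OK d = {z \<in> QF d. algebraic_int z}"

definition is_ideal :: "nat \<Rightarrow> complex set \<Rightarrow> bool" where
  "is_ideal d I \<longleftrightarrow> I \<subseteq> OK d \<and> 0 \<in> I \<and> (\<forall>x\<in>I. \<forall>y\<in>I. x + y \<in> I)
     \<and> (\<forall>r\<in>OK d. \<forall>x\<in>I. r * x \<in> I)"

definition ideal_mult :: "nat \<Rightarrow> complex set \<Rightarrow> complex set \<Rightarrow> complex set" where
  "ideal_mult d I J = \<Inter> {L. is_ideal d L \<and> {x * y | x y. x \<in> I \<and> y \<in> J} \<subseteq> L}"

definition principal :: "nat \<Rightarrow> complex set \<Rightarrow> bool" where
  "principal d I \<longleftrightarrow> (\<exists>g\<in>OK d. I = {g * x | x. x \<in> OK d})"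

definition coprime_ideals :: "nat \<Rightarrow> complex set \<Rightarrow> complex set \<Rightarrow> bool" where
  "coprime_ideals d I J \<longleftrightarrow> {x + y | x y. x \<in> I \<and> y \<in> J} = OK d"

definition ideal_norm :: "nat \<Rightarrow> complex set \<Rightarrow> nat" where
  "ideal_norm d I = card {{y \<in> OK d. x - y \<in> I} | x. x \<in> OK d}"

definition Jset :: "nat \<Rightarrow> complex set set" where
  "Jset d = {P. is_ideal d P \<and> P \<noteq> {0} \<and> P \<noteq> OK d
       \<and> coprime_ideals d P (cnj ` P) \<and> principal d (ideal_mult d P P)}"

definition two_sq :: "nat \<Rightarrow> complex set \<Rightarrow> complex set" where
  "two_sq d P = ideal_mult d {2 * x | x. x \<in> OK d} (ideal_mult d P P)"

definition ab_of :: "nat \<Rightarrow> complex set \<Rightarrow> int \<times> int" where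
  "ab_of d P = (THE (a, b). a > 0 \<and>
      two_sq d P = {(of_int a + of_int b * sqm d) * x | x. x \<in> OK d})"

definition theta :: "nat \<Rightarrow> complex set \<Rightarrow> int \<times> int \<times> int" where
  "theta d P = (int (ideal_norm d P), fst (ab_of d P), snd (ab_of d P))"

definition is_solution :: "nat \<Rightarrow> int \<times> int \<times> int \<Rightarrow> bool" where
  "is_solution d s \<longleftrightarrow> (case s of (n, a, b) \<Rightarrow>
      n > 0 \<and> a > 0 \<and> b \<noteq> 0 \<and> 4 * n ^ 2 = a ^ 2 + int d * b ^ 2)"

definition primitive_solutions :: "nat \<Rightarrow> (int \<times> int \<times> int) set" where
  "primitive_solutions d = {(n, a, b). is_solution d (n, a, b) \<and> gcd n a = 1}"

definition roots_unity :: "nat \<Rightarrow> complex set" where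
  "roots_unity d = {z \<in> QF d. \<exists>k::nat. k > 0 \<and> z ^ k = 1}"

definition K1 :: "nat \<Rightarrow> complex set" where
  "K1 d = {z \<in> QF d. z * cnj z = 1}"

definition denom_ideal :: "nat \<Rightarrow> complex \<Rightarrow> complex set" where
  "denom_ideal d z = {a \<in> OK d. a * z \<in> OK d}"

definition dz :: "nat \<Rightarrow> complex \<Rightarrow> nat" where
  "dz d z = ideal_norm d (denom_ideal d z)"

definition Fd :: "nat \<Rightarrow> nat" where
  "Fd d = (LEAST m. \<exists>z \<in> K1 d - roots_unity d. m = dz d z)"

end

theory Submission
  imports Defs
begin

lemma map_poly_hom_add:
  fixes f :: "'a::comm_ring_1 \<Rightarrow> 'b::comm_ring_1"
  assumes "\<And>a b. f (a + b) = f a + f b" "f 0 = 0"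
  shows "map_poly f (p + q) = map_poly f p + map_poly f q"
  by (rule poly_eqI) (simp add: coeff_map_poly assms)

lemma map_poly_hom_smult:
  fixes f :: "'a::comm_ring_1 \<Rightarrow> 'b::comm_ring_1"
  assumes "\<And>a b. f (a * b) = f a * f b" "f 0 = 0"
  shows "map_poly f (smult c p) = smult (f c) (map_poly f p)"
  by (rule poly_eqI) (simp add: coeff_map_poly assms)

lemma map_poly_hom_mult:
  fixes f :: "'a::comm_ring_1 \<Rightarrow> 'b::comm_ring_1"
  assumes "\<And>a b. f (a + b) = f a + f b" "\<And>a b. f (a * b) = f a * f b" "f 0 = 0"
  shows "map_poly f (p * q) = map_poly f p * map_poly f q"
proof (induction p rule: pCons_induct)
  case 0
  then show ?case by simp
next
  case (pCons a p)
  have "map_poly f (pCons a p * q) = map_poly f (smult a q + pCons 0 (p * q))"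
    by simp
  also have "\<dots> = smult (f a) (map_poly f q) + pCons 0 (map_poly f p * map_poly f q)"
    by (simp add: map_poly_hom_add[OF assms(1,3)] map_poly_hom_smult[OF assms(2,3)]
          map_poly_pCons assms(3) pCons.IH)
  also have "\<dots> = map_poly f (pCons a p) * map_poly f q"
    by (simp add: map_poly_pCons assms(3))
  finally show ?case .
qed

lemma sqm_sq: "sqm d * sqm d = - of_nat d"
proof -
  have "complex_of_real (sqrt (real d)) * complex_of_real (sqrt (real d)) = of_real (real d)"
    by (simp flip: of_real_mult)
  then show ?thesis unfolding sqm_def
    by (metis (no_types, lifting) i_squared mult.assoc mult.left_commute mult_minus1 of_real_of_nat_eq power2_eq_square)
qed

lemma Re_sqm [simp]: "Re (sqm d) = 0" and Im_sqm [simp]: "Im (sqm d) = sqrt (real d)"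
  by (simp_all add: sqm_def)

lemma cnj_sqm [simp]: "cnj (sqm d) = - sqm d"
  by (simp add: sqm_def)

lemma of_rat_complex: "(of_rat r :: complex) = of_real (of_rat r)"
  by (cases r) (simp add: of_rat_rat)

lemma quad_root_dvd:
  fixes P :: "rat poly" and x y :: rat and z :: complex
  assumes "poly (map_poly of_rat P) z = 0" "z = of_rat x + of_rat y * sqm d" "y \<noteq> 0" "d > 0"
  shows "[:x^2 + of_nat d * y^2, -2*x, 1:] dvd P"
proof -
  define q where "q = [:x^2 + of_nat d * y^2, -2*x, 1:]"
  define E where "E = (\<lambda>f::rat poly. poly (map_poly (of_rat :: rat \<Rightarrow> complex) f) z)"
  have hm: "map_poly (of_rat :: rat \<Rightarrow> complex) (a * b) = map_poly of_rat a * map_poly of_rat b" for a b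
    by (rule map_poly_hom_mult) (simp_all add: of_rat_add of_rat_mult)
  have ha: "map_poly (of_rat :: rat \<Rightarrow> complex) (a + b) = map_poly of_rat a + map_poly of_rat b" for a b
    by (rule map_poly_hom_add) (simp_all add: of_rat_add)
  have Em: "E (a * b) = E a * E b" for a b by (simp add: E_def hm)
  have Ea: "E (a + b) = E a + E b" for a b by (simp add: E_def ha)
  have q0: "q \<noteq> 0" by (simp add: q_def)
  have degq: "degree q = 2" by (simp add: q_def)
  have Eq: "E q = 0"
  proof -
    have "E q = of_rat (x^2 + of_nat d * y^2) + z * (of_rat (-2*x) + z)"
      by (simp add: E_def q_def map_poly_pCons)
    also have "\<dots> = (z - of_rat x)^2 + of_nat d * (of_rat y)^2"
      by (simp add: of_rat_add of_rat_mult of_rat_power of_rat_minus power2_eq_square algebra_simps)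
    also have "\<dots> = of_nat d * (of_rat y)^2 + (sqm d * sqm d) * (of_rat y)^2" using assms(2)
      by (simp add: power2_eq_square algebra_simps)
    also have "\<dots> = 0" by (simp add: sqm_sq)
    finally show ?thesis .
  qed
  define r where "r = P mod q"
  have "P = P div q * q + r" by (simp add: r_def)
  then have "E P = E (P div q) * E q + E r" by (metis Ea Em)
  then have Er: "E r = 0" using assms(1) Eq by (simp add: E_def)
  have "r = 0 \<or> degree r < 2" using degree_mod_less[OF q0, of P] degq by (auto simp: r_def)
  then have "degree r \<le> 1" by auto
  then have req: "r = [:coeff r 0, coeff r 1:]"
    by (intro poly_eqI) (auto simp: coeff_pCons coeff_eq_0 split: nat.splits)
  have "E r = of_rat (coeff r 0) + z * of_rat (coeff r 1)"
    by (subst req) (simp add: E_def map_poly_pCons)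
  with Er have e0: "of_rat (coeff r 0) + z * of_rat (coeff r 1) = 0" by simp
  then have "Im (of_rat (coeff r 0) + z * of_rat (coeff r 1)) = 0" by simp
  then have "of_rat y * sqrt (real d) * of_rat (coeff r 1) = (0::real)"
    using assms(2) by (simp add: of_rat_complex)
  then have c1: "coeff r 1 = 0" using assms(3,4) by simp
  with e0 have "coeff r 0 = 0" by simp
  with c1 req have "r = 0" by simp
  then show ?thesis by (simp add: r_def q_def mod_eq_0_iff_dvd)
qed

lemma clear_denom:
  fixes f :: "rat poly"
  shows "\<exists>D g. D > (0::int) \<and> map_poly of_int g = smult (of_int D) f"
proof (induction f rule: pCons_induct)
  case 0
  show ?case by (rule exI[of _ 1], rule exI[of _ 0]) simp
next
  case (pCons a f)
  then obtain D g where Dg: "D > 0" "map_poly of_int g = smult (of_int D) f" by blast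
  obtain n m where nm: "m > 0" "a = of_int n / of_int m"
    by (cases a) (auto simp: Fract_of_int_quotient)
  have "map_poly of_int (pCons (n * D) (smult m g)) = smult (of_int (D * m)) (pCons a f)"
    using Dg nm
    by (simp add: map_poly_pCons map_poly_hom_smult mult.commute)
  moreover have "D * m > 0" using Dg nm by simp
  ultimately show ?case by blast
qed

lemma map_poly_of_int_inj:
  fixes p q :: "int poly"
  assumes "(map_poly of_int p :: rat poly) = map_poly of_int q"
  shows "p = q"
proof (rule poly_eqI)
  fix n
  have "coeff (map_poly of_int p :: rat poly) n = coeff (map_poly of_int q) n" using assms by simp
  then show "coeff p n = coeff q n" by (simp add: coeff_map_poly)
qed

lemma gauss_quadratic:
  fixes p :: "int poly" and T N :: rat
  assumes lc: "lead_coeff p = 1" and dv: "[:N, T, 1:] dvd map_poly of_int p"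
  shows "T \<in> \<int> \<and> N \<in> \<int>"
proof -
  define q where "q = [:N, T, 1:]"
  from dv obtain s where ps: "map_poly of_int p = q * s" by (auto simp: q_def)
  have hm: "map_poly (of_int :: int \<Rightarrow> rat) (a * b) = map_poly of_int a * map_poly of_int b" for a b
    by (rule map_poly_hom_mult) simp_all
  obtain D1 g1 where g1: "D1 > 0" "map_poly of_int g1 = smult (of_int D1) q"
    using clear_denom by blast
  obtain D2 g2 where g2: "D2 > 0" "map_poly of_int g2 = smult (of_int D2) s"
    using clear_denom by blast
  have lp: "lead_coeff (map_poly (of_int :: int \<Rightarrow> rat) p) = 1"
    using lc by (simp add: degree_map_poly coeff_map_poly)
  have lq: "lead_coeff q = 1" by (simp add: q_def)
  have s0: "s \<noteq> 0" using ps lp by auto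
  have ls: "lead_coeff s = 1" using ps lp lq by (simp add: lead_coeff_mult)
  have "map_poly of_int (g1 * g2) = smult (of_int (D1 * D2)) (map_poly (of_int :: int \<Rightarrow> rat) p)"
    by (simp add: hm g1 g2 ps mult_ac)
  also have "\<dots> = map_poly of_int (smult (D1 * D2) p)"
    by (simp add: map_poly_hom_smult)
  finally have eq: "g1 * g2 = smult (D1 * D2) p" by (rule map_poly_of_int_inj)
  have cp: "content p = 1"
  proof -
    have "content p dvd 1" using content_dvd_coeff[of p "degree p"] lc by simp
    then show ?thesis by (metis normalize_content is_unit_normalize normalize_1) 
  qed
  have "content (g1 * g2) = D1 * D2"
    using g1(1) g2(1) by (simp add: eq content_smult cp abs_mult)
  then have cc: "content g1 * content g2 = D1 * D2" by (simp add: content_mult)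
  have dg1: "degree (map_poly (of_int :: int \<Rightarrow> rat) g1) = 2"
    using g1 by (simp add: q_def)
  have "coeff (map_poly (of_int :: int \<Rightarrow> rat) g1) 2 = of_int D1"
    using g1 by (simp add: q_def numeral_2_eq_2)
  then have cg1: "coeff g1 2 = D1" by (simp add: coeff_map_poly)
  have "lead_coeff (map_poly (of_int :: int \<Rightarrow> rat) g2) = of_int D2"
    using g2 ls by (simp add: degree_map_poly)
  then have cg2: "lead_coeff g2 = D2" by (simp add: degree_map_poly coeff_map_poly)
  have d1: "content g1 dvd D1" using content_dvd_coeff[of g1 2] cg1 by simp
  have d2: "content g2 dvd D2" using content_dvd_coeff[of g2 "degree g2"] cg2 by simp
  have c1pos: "content g1 \<ge> 0" "content g2 \<ge> 0"
    by (metis normalize_content abs_ge_zero normalize_int_def)+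
  have le1: "content g1 \<le> D1" using d1 g1(1) by (simp add: zdvd_imp_le)
  have le2: "content g2 \<le> D2" using d2 g2(1) by (simp add: zdvd_imp_le)
  have "content g1 = D1"
  proof (rule ccontr)
    assume "content g1 \<noteq> D1"
    then have "content g1 < D1" using le1 by simp
    have "content g1 * content g2 \<le> content g1 * D2"
      using c1pos le2 by (simp add: mult_left_mono)
    also have "\<dots> < D1 * D2" using \<open>content g1 < D1\<close> g2(1) by (simp add: mult_strict_right_mono)
    finally have "content g1 * content g2 < D1 * D2" .
    then show False using cc by simp
  qed
  then have dvdall: "D1 dvd coeff g1 i" for i using content_dvd_coeff[of g1 i] by simp
  obtain k0 where k0: "coeff g1 0 = D1 * k0" using dvdall[of 0] by (auto elim: dvdE)
  obtain k1 where k1: "coeff g1 (Suc 0) = D1 * k1" using dvdall[of "Suc 0"] by (auto elim: dvdE)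
  have "coeff (map_poly (of_int :: int \<Rightarrow> rat) g1) 0 = of_int D1 * N"
    using g1 by (simp add: q_def)
  then have "of_int D1 * N = of_int D1 * of_int k0" by (auto simp: coeff_map_poly k0)
  then have "N = of_int k0" using g1(1) by auto
  moreover have "coeff (map_poly (of_int :: int \<Rightarrow> rat) g1) (Suc 0) = of_int D1 * T"
    using g1 by (simp add: q_def)
  then have "of_int D1 * T = of_int D1 * of_int k1" by (auto simp: coeff_map_poly k1)
  then have "T = of_int k1" using g1(1) by auto
  ultimately show ?thesis by simp
qed


definition ww :: "nat \<Rightarrow> complex" where
  "ww d = (if d mod 4 = 3 then (1 + sqm d) / 2 else sqm d)"
definition tt :: "nat \<Rightarrow> int" where "tt d = (if d mod 4 = 3 then 1 else 0)"
definition mm :: "nat \<Rightarrow> int" where "mm d = (if d mod 4 = 3 then (int d + 1) div 4 else int d)"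
definition sc :: "nat \<Rightarrow> int" where "sc d = (if d mod 4 = 3 then 1 else 2)"
definition emb :: "nat \<Rightarrow> int \<Rightarrow> int \<Rightarrow> complex" where
  "emb d x y = of_int x + of_int y * ww d"

lemma ww_alt: "2 * ww d = of_int (tt d) + of_int (sc d) * sqm d"
  by (simp add: ww_def tt_def sc_def)

lemma mm_id: "4 * mm d - tt d ^ 2 = int d * sc d ^ 2"
proof (cases "d mod 4 = 3")
  case True
  then have "(int d + 1) mod 4 = 0" by presburger
  then have "4 * ((int d + 1) div 4) = int d + 1" by presburger
  then show ?thesis using True by (simp add: mm_def tt_def sc_def)
qed (simp add: mm_def tt_def sc_def)

lemma tt_sq: "tt d ^ 2 = tt d" by (simp add: tt_def)

lemma ww_sq: "ww d * ww d = of_int (tt d) * ww d - of_int (mm d)"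
proof -
  have "4 * (ww d * ww d) = (2 * ww d) * (2 * ww d)" by simp
  also have "\<dots> = (of_int (tt d) + of_int (sc d) * sqm d) * (of_int (tt d) + of_int (sc d) * sqm d)"
    by (simp only: ww_alt)
  also have "\<dots> = of_int (tt d ^ 2) + 2 * of_int (tt d) * of_int (sc d) * sqm d
     + of_int (sc d ^ 2) * (sqm d * sqm d)"
    by (simp add: power2_eq_square algebra_simps)
  also have "\<dots> = of_int (tt d ^ 2) + 2 * of_int (tt d) * of_int (sc d) * sqm d
     - of_int (int d * sc d ^ 2)"
    by (simp add: sqm_sq)
  also have "\<dots> = of_int (tt d ^ 2) + 2 * of_int (tt d) * of_int (sc d) * sqm d
     - of_int (4 * mm d - tt d ^ 2)"
    by (simp only: mm_id)
  also have "\<dots> = 4 * (of_int (tt d) * ww d - of_int (mm d))"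
  proof -
    have "4 * (of_int (tt d) * ww d - of_int (mm d)) = 2 * of_int (tt d) * (2 * ww d) - 4 * of_int (mm d)"
      by (simp add: algebra_simps)
    also have "\<dots> = 2 * of_int (tt d) * (of_int (tt d) + of_int (sc d) * sqm d) - 4 * of_int (mm d)"
      by (simp only: ww_alt)
    finally show ?thesis by (simp add: power2_eq_square algebra_simps)
  qed
  finally have "4 * (ww d * ww d) = 4 * (of_int (tt d) * ww d - of_int (mm d))" .
  then show ?thesis by (metis mult_cancel_left zero_neq_numeral)
qed

lemma cnj_ww: "cnj (ww d) = of_int (tt d) - ww d"
  by (simp add: ww_def tt_def complex_eq_iff)

lemma Im_ww: "Im (ww d) = of_int (sc d) * sqrt (real d) / 2"
  by (simp add: ww_def sc_def)

lemma Re_ww: "Re (ww d) = of_int (tt d) / 2"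
  by (simp add: ww_def tt_def)

lemma sc_pos: "sc d > 0" by (simp add: sc_def)

lemma emb_eq_iff:
  assumes "d > 0"
  shows "emb d x y = emb d x' y' \<longleftrightarrow> x = x' \<and> y = y'"
proof
  assume h: "emb d x y = emb d x' y'"
  have "Im (emb d x y) = Im (emb d x' y')" using h by simp
  then have "real_of_int y * (of_int (sc d) * sqrt (real d) / 2) = of_int y' * (of_int (sc d) * sqrt (real d) / 2)"
    by (simp add: emb_def Im_ww)
  moreover have "of_int (sc d) * sqrt (real d) / 2 \<noteq> 0" using assms sc_pos[of d] by simp
  ultimately have "y = y'" by simp
  with h show "x = x' \<and> y = y'" by (simp add: emb_def)
qed simp

lemma emb_add: "emb d x y + emb d x' y' = emb d (x + x') (y + y')"
  by (simp add: emb_def algebra_simps)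
lemma emb_minus: "- emb d x y = emb d (-x) (-y)"
  by (simp add: emb_def algebra_simps)
lemma emb_diff: "emb d x y - emb d x' y' = emb d (x - x') (y - y')"
  by (simp add: emb_def algebra_simps)
lemma emb_mult: "emb d x y * emb d x' y' = emb d (x * x' - mm d * y * y') (x * y' + y * x' + tt d * y * y')"
proof -
  have "emb d x y * emb d x' y' = of_int (x*x') + of_int (x * y' + y * x') * ww d + of_int (y * y') * (ww d * ww d)"
    by (simp add: emb_def algebra_simps)
  also have "\<dots> = emb d (x * x' - mm d * y * y') (x * y' + y * x' + tt d * y * y')"
    by (simp add: ww_sq emb_def algebra_simps)
  finally show ?thesis .
qed
lemma emb_cnj: "cnj (emb d x y) = emb d (x + tt d * y) (- y)"
  by (simp add: emb_def cnj_ww algebra_simps)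
lemma emb_of_int: "of_int k = emb d k 0" by (simp add: emb_def)
lemma emb_0: "0 = emb d 0 0" by (simp add: emb_def)
lemma emb_1: "1 = emb d 1 0" by (simp add: emb_def)
lemma emb_ww: "ww d = emb d 0 1" by (simp add: emb_def)
lemma emb_smult: "of_int k * emb d x y = emb d (k * x) (k * y)"
  by (simp add: emb_def algebra_simps)

lemma emb_half: "2 * emb d x y = of_int (2 * x + tt d * y) + of_int (sc d * y) * sqm d"
proof -
  have "2 * emb d x y = 2 * of_int x + of_int y * (2 * ww d)" by (simp add: emb_def algebra_simps)
  also have "\<dots> = of_int (2 * x + tt d * y) + of_int (sc d * y) * sqm d"
    by (simp only: ww_alt) (simp add: algebra_simps)
  finally show ?thesis .
qed

lemma emb_norm: "emb d x y * cnj (emb d x y) = of_int (x^2 + tt d * x * y + mm d * y^2)"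
proof -
  have "emb d x y * cnj (emb d x y) = emb d (x * (x + tt d * y) - mm d * y * (- y)) (x * (- y) + y * (x + tt d * y) + tt d * y * (- y))"
    by (simp only: emb_cnj emb_mult)
  also have "\<dots> = emb d (x^2 + tt d * x * y + mm d * y^2) 0"
    by (simp add: algebra_simps power2_eq_square)
  finally show ?thesis by (simp add: emb_def)
qed

lemma emb_trace: "emb d x y + cnj (emb d x y) = of_int (2 * x + tt d * y)"
proof -
  have "emb d x y + cnj (emb d x y) = emb d (x + (x + tt d * y)) (y + - y)"
    by (simp only: emb_cnj emb_add)
  then show ?thesis by (simp add: emb_def)
qed

lemma sqf_int: "squarefree d \<Longrightarrow> (x::int)^2 dvd int d \<Longrightarrow> \<bar>x\<bar> = 1"
proof -
  assume sq: "squarefree d" and dv: "x^2 dvd int d"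
  have "int ((nat \<bar>x\<bar>)^2) = x^2" by simp
  with dv have "(nat \<bar>x\<bar>)^2 dvd d" by (metis int_dvd_int_iff)
  then have "nat \<bar>x\<bar> dvd 1" using squarefreeD[OF sq] by blast
  then show ?thesis by simp
qed

lemma sqf_rat:
  assumes "squarefree d" "of_nat d * r^2 \<in> \<int>"
  shows "(r::rat) \<in> \<int>"
proof -
  obtain a b where ab: "r = Fract a b" "b > 0" "coprime a b" by (cases r) auto
  then have r: "r = of_int a / of_int b" by (simp add: Fract_of_int_quotient)
  from assms(2) obtain k where "of_nat d * r^2 = of_int k" by (auto elim: Ints_cases)
  then have "of_int (int d * a^2) = (of_int (k * b^2) :: rat)"
    using ab(2) by (simp add: r field_simps power2_eq_square)
  then have e: "int d * a^2 = k * b^2" by (simp only: of_int_eq_iff)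
  have "b^2 dvd int d * a^2" by (simp add: e)
  moreover have "coprime (b^2) (a^2)" using ab(3) by (simp add: coprime_commute)
  ultimately have "b^2 dvd int d" by (meson coprime_dvd_mult_left_iff)
  then have "\<bar>b\<bar> = 1" using sqf_int[OF assms(1)] by blast
  then have "b = 1" using ab(2) by simp
  then show ?thesis by (simp add: r)
qed

lemma sq_mod4: "((A::int)^2) mod 4 = (if even A then 0 else 1)"
proof (cases "even A")
  case True
  then obtain a where "A = 2 * a" by blast
  then show ?thesis by (simp add: power2_eq_square)
next
  case False
  then obtain a where a: "A = 2 * a + 1" using oddE by blast
  have "A^2 = 1 + 4 * (a^2 + a)" by (simp add: a power2_eq_square algebra_simps)
  then have "A^2 mod 4 = (1 + 4 * (a^2 + a)) mod 4" by (rule arg_cong)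
  also have "\<dots> = 1" by (simp only: mod_mult_self2) simp
  finally show ?thesis using False by simp
qed

lemma sqf_not4: "squarefree (d::nat) \<Longrightarrow> d mod 4 \<noteq> 0"
proof
  assume "squarefree d" "d mod 4 = 0"
  then have "(2::nat)^2 dvd d" by auto
  then have "(2::nat) dvd 1" using squarefreeD[OF \<open>squarefree d\<close>] by blast
  then show False by simp
qed

lemma half_emb:
  assumes "squarefree d" "4 dvd A^2 + int d * B^2"
  shows "\<exists>x y. (of_int A + of_int B * sqm d) / 2 = emb d x y"
proof -
  have m1: "(A^2 + int d * B^2) mod 4 = (A^2 mod 4 + (int d * B^2) mod 4) mod 4"
    by (simp add: mod_add_eq)
  have m2: "(int d * B^2) mod 4 = ((int d mod 4) * (B^2 mod 4)) mod 4"
    by (simp add: mod_mult_eq)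
  have m3: "(A^2 mod 4 + ((int d mod 4) * (B^2 mod 4)) mod 4) mod 4 = ((A^2 mod 4) + (int d mod 4) * (B^2 mod 4)) mod 4"
    by (simp add: mod_add_right_eq)
  have m: "(A^2 + int d * B^2) mod 4 = ((A^2 mod 4) + (int d mod 4) * (B^2 mod 4)) mod 4"
    by (simp only: m1 m2 m3)
  have d4: "int d mod 4 = int (d mod 4)" by (simp add: zmod_int)
  have dm: "d mod 4 = 1 \<or> d mod 4 = 2 \<or> d mod 4 = 3" using sqf_not4[OF assms(1)] by presburger
  show ?thesis
  proof (cases "d mod 4 = 3")
    case True
    have "even (A - B)"
      using assms(2) m d4 True by (auto simp: sq_mod4 split: if_splits)
    then obtain x where x: "A - B = 2 * x" by blast
    then have xA: "A = B + 2 * x" by simp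
    have "(of_int A + of_int B * sqm d) / 2 = emb d x B"
      using True by (simp add: emb_def ww_def field_simps xA)
    then show ?thesis by blast
  next
    case False
    then have "d mod 4 = 1 \<or> d mod 4 = 2" using dm by auto
    then have "even A \<and> even B"
      using assms(2) m d4 by (auto simp: sq_mod4 split: if_splits)
    then obtain x y where xy: "A = 2 * x" "B = 2 * y" by blast
    have "(of_int A + of_int B * sqm d) / 2 = emb d x y"
      using False by (simp add: emb_def ww_def xy)
    then show ?thesis by blast
  qed
qed

lemma emb_in_OK: "emb d x y \<in> OK d"
proof -
  have "emb d x y = complex_of_real (of_int x + of_int y * of_int (tt d) / 2) + complex_of_real (of_int y * of_int (sc d) / 2) * sqm d"
  proof -
    have "2 * emb d x y = 2 * (complex_of_real (of_int x + of_int y * of_int (tt d) / 2) + complex_of_real (of_int y * of_int (sc d) / 2) * sqm d)"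
      by (subst emb_half) (simp add: algebra_simps)
    then show ?thesis by (metis mult_cancel_left zero_neq_numeral)
  qed
  moreover have "(of_int x + of_int y * of_int (tt d) / 2 :: real) \<in> \<rat>" "(of_int y * of_int (sc d) / 2 :: real) \<in> \<rat>"
    by simp_all
  ultimately have "emb d x y \<in> QF d" unfolding QF_def by blast
  moreover have "algebraic_int (emb d x y)"
  proof
    let ?z = "emb d x y"
    let ?p = "[:of_int (x^2 + tt d * x * y + mm d * y^2), - of_int (2 * x + tt d * y), 1:] :: complex poly"
    show "lead_coeff ?p = 1" by simp
    show "\<forall>i. coeff ?p i \<in> \<int>" by (auto simp: coeff_pCons split: nat.splits)
    have "poly ?p ?z = ?z * cnj ?z - (?z + cnj ?z) * ?z + ?z * ?z"
      by (simp only: emb_norm emb_trace) (simp add: algebra_simps)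
    also have "\<dots> = 0" by (simp add: algebra_simps)
    finally show "poly ?p ?z = 0" .
  qed
  ultimately show ?thesis by (simp add: OK_def)
qed


lemma OK_emb:
  assumes sq: "squarefree d" and z: "z \<in> OK d"
  shows "\<exists>x y. z = emb d x y"
proof -
  from z obtain r1 r2 where r: "z = complex_of_real r1 + complex_of_real r2 * sqm d" "r1 \<in> \<rat>" "r2 \<in> \<rat>"
    and ai: "algebraic_int z"
    by (auto simp: OK_def QF_def)
  obtain q1 where q1: "r1 = of_rat q1" using r(2) by (auto elim: Rats_cases)
  obtain q2 where q2: "r2 = of_rat q2" using r(3) by (auto elim: Rats_cases)
  have zq: "z = of_rat q1 + of_rat q2 * sqm d" using r(1) q1 q2 by (simp add: of_rat_complex)
  have d0: "d > 0" using sq by (cases d) auto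
  show ?thesis
  proof (cases "q2 = 0")
    case True
    then have "z = complex_of_real (of_rat q1)" using zq by (simp add: of_rat_complex)
    with ai have "algebraic_int (of_rat q1 :: real)" by simp
    then have "(of_rat q1 :: real) \<in> \<int>" by (rule rational_algebraic_int_is_int) simp
    then obtain k where "(of_rat q1 :: real) = of_int k" by (auto elim: Ints_cases)
    then have "z = emb d k 0" using \<open>z = complex_of_real (of_rat q1)\<close> by (simp add: emb_def)
    then show ?thesis by blast
  next
    case False
    from ai obtain p where p: "poly (map_poly of_int p) z = 0" "lead_coeff p = 1"
      by (auto simp: algebraic_int_altdef_ipoly)
    define P where "P = (map_poly of_int p :: rat poly)"
    have "map_poly (of_rat :: rat \<Rightarrow> complex) P = map_poly of_int p"
      by (simp add: P_def map_poly_map_poly o_def)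
    then have "poly (map_poly (of_rat :: rat \<Rightarrow> complex) P) z = 0" using p by simp
    from quad_root_dvd[OF this zq False d0]
    have "[:q1^2 + of_nat d * q2^2, -2*q1, 1:] dvd map_poly of_int p" by (simp add: P_def)
    from gauss_quadratic[OF p(2) this]
    have h1: "-2*q1 \<in> \<int>" and h2: "q1^2 + of_nat d * q2^2 \<in> \<int>" by auto
    obtain A where A: "-2*q1 = of_int A" using h1 by (metis Ints_cases)
    obtain N where N: "q1^2 + of_nat d * q2^2 = of_int N" using h2 by (metis Ints_cases)
    note AN = A N
    have "of_nat d * (2*q2)^2 = of_int (4 * N - A^2)"
      by (simp add: power2_eq_square algebra_simps flip: A N)
    then have "of_nat d * (2*q2)^2 \<in> \<int>" by simp
    then have "2 * q2 \<in> \<int>" by (rule sqf_rat[OF sq])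
    then obtain B where B: "2 * q2 = of_int B" by (metis Ints_cases)
    have "of_int (A^2 + int d * B^2) = (of_int (4 * N) :: rat)"
      by (simp add: power2_eq_square algebra_simps flip: A N B)
    then have "A^2 + int d * B^2 = 4 * N" by (simp only: of_int_eq_iff)
    then have "4 dvd (-A)^2 + int d * B^2" by simp
    from half_emb[OF sq this] obtain x y where xy: "(of_int (-A) + of_int B * sqm d) / 2 = emb d x y"
      by blast
    have "z = (of_int (-A) + of_int B * sqm d) / 2"
    proof -
      have "2 * q1 = of_int (-A)" using A by simp
      then have "(of_rat (2 * q1) :: complex) = of_rat (of_int (-A))" by (rule arg_cong)
      then have "(of_rat (2 * q1) :: complex) = of_int (-A)" by (simp only: of_rat_of_int_eq)
      moreover have "(of_rat (2 * q2) :: complex) = of_rat (of_int B)" using B by (rule arg_cong)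
      then have "(of_rat (2 * q2) :: complex) = of_int B" by (simp only: of_rat_of_int_eq)
      ultimately show ?thesis using zq by (simp add: of_rat_mult field_simps)
    qed
    with xy show ?thesis by auto
  qed
qed


lemma bez_coprime: "u * a + v * b = (1::int) \<Longrightarrow> coprime a b"
proof (rule coprimeI)
  fix c assume h: "u * a + v * b = 1" "c dvd a" "c dvd b"
  have "c dvd u * a + v * b" using h(2,3) by simp
  then have "c dvd 1" using h(1) by simp
  then show "is_unit c" .
qed

lemma coprime_bez: "coprime (a::int) b \<Longrightarrow> \<exists>u v. u * a + v * b = 1"
  using bezout_int[of a b] by simp

definition nrm :: "nat \<Rightarrow> int \<Rightarrow> int \<Rightarrow> int" where
  "nrm d x y = x^2 + tt d * x * y + mm d * y^2"

lemma nrm4: "4 * nrm d x y = (2 * x + tt d * y)^2 + int d * sc d ^ 2 * y^2"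
proof -
  have "4 * nrm d x y = (2 * x + tt d * y)^2 + (4 * mm d - tt d ^ 2) * y^2"
    by (simp add: nrm_def power2_eq_square algebra_simps)
  then show ?thesis by (simp add: mm_id)
qed

lemma emb_norm': "emb d x y * cnj (emb d x y) = of_int (nrm d x y)"
  by (simp add: emb_norm nrm_def)

definition cs :: "nat \<Rightarrow> complex set \<Rightarrow> complex \<Rightarrow> complex set" where
  "cs d I x = {y \<in> OK d. x - y \<in> I}"

definition pr :: "nat \<Rightarrow> complex \<Rightarrow> complex set" where
  "pr d g = {g * x | x. x \<in> OK d}"

definition Lat :: "nat \<Rightarrow> int \<Rightarrow> int \<Rightarrow> complex set" where
  "Lat d e c = {emb d (i * e + j * c) j | i j. True}"

locale qf =
  fixes d :: nat
  assumes sq: "squarefree d" and d1: "d \<noteq> 1" and d3: "d \<noteq> 3"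
begin

lemma d_pos: "d > 0" using sq by (cases d) auto
lemma d_ge2: "d \<ge> 2" using d_pos d1 by simp

lemma OK_iff: "z \<in> OK d \<longleftrightarrow> (\<exists>x y. z = emb d x y)"
  using OK_emb[OF sq] emb_in_OK by blast

lemma emb_inj: "emb d x y = emb d x' y' \<longleftrightarrow> x = x' \<and> y = y'"
  using emb_eq_iff[OF d_pos] .

lemma OK_add: "x \<in> OK d \<Longrightarrow> y \<in> OK d \<Longrightarrow> x + y \<in> OK d"
  by (metis OK_iff emb_add emb_in_OK)
lemma OK_diff: "x \<in> OK d \<Longrightarrow> y \<in> OK d \<Longrightarrow> x - y \<in> OK d"
  by (metis OK_iff emb_diff emb_in_OK)
lemma OK_minus: "x \<in> OK d \<Longrightarrow> - x \<in> OK d"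
  by (metis OK_iff emb_minus emb_in_OK)
lemma OK_mult: "x \<in> OK d \<Longrightarrow> y \<in> OK d \<Longrightarrow> x * y \<in> OK d"
  by (metis OK_iff emb_mult emb_in_OK)
lemma OK_cnj: "x \<in> OK d \<Longrightarrow> cnj x \<in> OK d"
  by (metis OK_iff emb_cnj emb_in_OK)
lemma OK_int [simp]: "of_int k \<in> OK d"
  by (metis emb_of_int emb_in_OK)
lemma OK_0 [simp]: "0 \<in> OK d" using OK_int[of 0] by simp
lemma OK_1 [simp]: "1 \<in> OK d" using OK_int[of 1] by simp
lemma OK_ww [simp]: "ww d \<in> OK d" by (metis emb_ww emb_in_OK)
lemma OK_emb [simp]: "emb d x y \<in> OK d" by (rule emb_in_OK)

lemma mm_ge2: "mm d \<ge> 2"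
proof (cases "d mod 4 = 3")
  case True
  then have "d \<ge> 7" using d3 by presburger
  then show ?thesis using True by (simp add: mm_def)
next
  case False
  then show ?thesis using d_ge2 by (simp add: mm_def)
qed

lemma dsc_gt4: "int d * sc d ^ 2 > 4"
proof (cases "d mod 4 = 3")
  case True
  then have "d \<ge> 7" using d3 by presburger
  then show ?thesis using True by (simp add: sc_def)
next
  case False
  then show ?thesis using d_ge2 by (simp add: sc_def)
qed

lemma nrm_nonneg: "nrm d x y \<ge> 0"
proof -
  have "4 * nrm d x y \<ge> 0" unfolding nrm4 using d_pos by (intro add_nonneg_nonneg) simp_all
  then show ?thesis by simp
qed

lemma nrm_pos: "(x, y) \<noteq> (0, 0) \<Longrightarrow> nrm d x y > 0"
proof -
  assume h: "(x, y) \<noteq> (0, 0)"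
  have "4 * nrm d x y > 0"
  proof (cases "y = 0")
    case True
    then have "x \<noteq> 0" using h by simp
    then show ?thesis using True by (simp add: nrm4)
  next
    case False
    have "int d * sc d ^ 2 * y^2 > 0" using False d_pos sc_pos[of d] by simp
    then show ?thesis unfolding nrm4 by (simp add: add_nonneg_pos)
  qed
  then show ?thesis by simp
qed

lemma nrm_one: "nrm d x y = 1 \<Longrightarrow> y = 0 \<and> (x = 1 \<or> x = -1)"
proof -
  assume h: "nrm d x y = 1"
  have e: "4 = (2 * x + tt d * y)^2 + int d * sc d ^ 2 * y^2" using nrm4[of d x y] h by simp
  have y0: "y = 0"
  proof (rule ccontr)
    assume "y \<noteq> 0"
    then have "y^2 > 0" by simp
    then have "y^2 \<ge> 1" by (simp add: int_one_le_iff_zero_less)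
    moreover have "int d * sc d ^ 2 \<ge> 0" by simp
    ultimately have "int d * sc d ^ 2 * 1 \<le> int d * sc d ^ 2 * y^2" by (rule mult_left_mono)
    then have "int d * sc d ^ 2 * y^2 \<ge> int d * sc d ^ 2" by simp
    then have "int d * sc d ^ 2 * y^2 > 4" using dsc_gt4 by simp
    with e show False by (smt (verit) zero_le_power2)
  qed
  with e have "x^2 = 1" by (simp add: power2_eq_square)
  then show ?thesis using y0 by (simp add: power2_eq_1_iff)
qed

lemma unit_OK: "r \<in> OK d \<Longrightarrow> r' \<in> OK d \<Longrightarrow> r * r' = 1 \<Longrightarrow> r = 1 \<or> r = -1"
proof -
  assume "r \<in> OK d" "r' \<in> OK d" and rr: "r * r' = 1"
  then obtain x y x' y' where xy: "r = emb d x y" "r' = emb d x' y'" by (auto simp: OK_iff)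
  have "(r * cnj r) * (r' * cnj r') = (r * r') * cnj (r * r')" by (simp add: algebra_simps)
  also have "\<dots> = 1" using rr by simp
  finally have "(r * cnj r) * (r' * cnj r') = 1" .
  then have "of_int (nrm d x y * nrm d x' y') = (1::complex)" by (simp only: xy emb_norm' of_int_mult)
  then have "nrm d x y * nrm d x' y' = 1" by (simp only: of_int_eq_1_iff)
  then have "nrm d x y = 1 \<or> nrm d x y = -1" using zmult_eq_1_iff by blast
  then have "nrm d x y = 1" using nrm_nonneg[of x y] by linarith
  from nrm_one[OF this] show ?thesis using xy by (auto simp: emb_def)
qed

lemma real_OK: "z \<in> OK d \<Longrightarrow> Im z = 0 \<Longrightarrow> \<exists>k. z = of_int k"
proof -
  assume "z \<in> OK d" "Im z = 0"
  then obtain x y where z: "z = emb d x y" by (auto simp: OK_iff)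
  have "Im z = of_int y * (of_int (sc d) * sqrt (real d) / 2)" by (simp add: z emb_def Im_ww)
  moreover have "of_int (sc d) * sqrt (real d) / 2 \<noteq> 0" using d_pos sc_pos[of d] by simp
  ultimately have "y = 0" using \<open>Im z = 0\<close> by simp
  then show ?thesis using z by (auto simp: emb_def)
qed

lemma int_in_intOK: "of_int k = of_int q * z \<Longrightarrow> z \<in> OK d \<Longrightarrow> q dvd k"
proof -
  assume h: "of_int k = of_int q * z" "z \<in> OK d"
  then obtain x y where z: "z = emb d x y" by (auto simp: OK_iff)
  have "emb d k 0 = emb d (q * x) (q * y)" using h by (simp add: z emb_smult emb_of_int[symmetric])
  then show ?thesis by (simp add: emb_inj)
qed

lemma sqm_inj: "of_int a + of_int b * sqm d = of_int a' + of_int b' * sqm d \<Longrightarrow> a = a' \<and> b = b'"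
proof -
  assume h: "of_int a + of_int b * sqm d = of_int a' + of_int b' * sqm d"
  have "Re (of_int a + of_int b * sqm d) = Re (of_int a' + of_int b' * sqm d)" using h by simp
  then have "a = a'" by simp
  have "Im (of_int a + of_int b * sqm d) = Im (of_int a' + of_int b' * sqm d)" using h by simp
  then have "of_int b * sqrt (real d) = of_int b' * sqrt (real d)" by simp
  then have "b = b'" using d_pos by simp
  with \<open>a = a'\<close> show ?thesis by simp
qed

lemma ideal_sub: "is_ideal d I \<Longrightarrow> I \<subseteq> OK d" by (simp add: is_ideal_def)
lemma ideal_0: "is_ideal d I \<Longrightarrow> 0 \<in> I" by (simp add: is_ideal_def)
lemma ideal_add: "is_ideal d I \<Longrightarrow> x \<in> I \<Longrightarrow> y \<in> I \<Longrightarrow> x + y \<in> I" by (simp add: is_ideal_def)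
lemma ideal_mul: "is_ideal d I \<Longrightarrow> r \<in> OK d \<Longrightarrow> x \<in> I \<Longrightarrow> r * x \<in> I" by (simp add: is_ideal_def)
lemma ideal_mul': "is_ideal d I \<Longrightarrow> r \<in> OK d \<Longrightarrow> x \<in> I \<Longrightarrow> x * r \<in> I"
  using ideal_mul[of I r x] by (simp add: mult.commute)
lemma ideal_minus: "is_ideal d I \<Longrightarrow> x \<in> I \<Longrightarrow> - x \<in> I"
  using ideal_mul[of I "-1" x] OK_int[of "-1"] by simp
lemma ideal_diff: "is_ideal d I \<Longrightarrow> x \<in> I \<Longrightarrow> y \<in> I \<Longrightarrow> x - y \<in> I"
  using ideal_add[of I x "-y"] ideal_minus[of I y] by simp
lemma ideal_int: "is_ideal d I \<Longrightarrow> x \<in> I \<Longrightarrow> of_int k * x \<in> I"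
  using ideal_mul[of I "of_int k" x] by simp

lemma OK_ideal: "is_ideal d (OK d)"
  by (simp add: is_ideal_def OK_add OK_mult)

lemma pr_ideal: "g \<in> OK d \<Longrightarrow> is_ideal d (pr d g)"
  unfolding is_ideal_def pr_def
proof (intro conjI ballI)
  assume g: "g \<in> OK d"
  show "{g * x |x. x \<in> OK d} \<subseteq> OK d" using g OK_mult by auto
  show "0 \<in> {g * x |x. x \<in> OK d}" by (rule CollectI, rule exI[of _ 0]) simp
  fix x y assume "x \<in> {g * x |x. x \<in> OK d}" "y \<in> {g * x |x. x \<in> OK d}"
  then obtain x' y' where "x = g * x'" "y = g * y'" "x' \<in> OK d" "y' \<in> OK d" by blast
  then have "x + y = g * (x' + y')" "x' + y' \<in> OK d" by (simp_all add: distrib_left OK_add)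
  then show "x + y \<in> {g * x |x. x \<in> OK d}" by blast
next
  fix r x assume "r \<in> OK d" "x \<in> {g * x |x. x \<in> OK d}"
  then obtain x' where "x = g * x'" "x' \<in> OK d" by blast
  then have "r * x = g * (r * x')" "r * x' \<in> OK d" using \<open>r \<in> OK d\<close> by (simp_all add: mult_ac OK_mult)
  then show "r * x \<in> {g * x |x. x \<in> OK d}" by blast
qed

lemma pr_mem: "x \<in> OK d \<Longrightarrow> g * x \<in> pr d g" by (auto simp: pr_def)
lemma pr_self: "g \<in> pr d g" using pr_mem[of 1 g] by simp

lemma IM_ideal: "is_ideal d I \<Longrightarrow> is_ideal d J \<Longrightarrow> is_ideal d (ideal_mult d I J)"
proof -
  assume I: "is_ideal d I" and J: "is_ideal d J"
  let ?F = "{L. is_ideal d L \<and> {x * y |x y. x \<in> I \<and> y \<in> J} \<subseteq> L}"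
  have "OK d \<in> ?F" using OK_ideal ideal_sub[OF I] ideal_sub[OF J] OK_mult by blast
  then show ?thesis unfolding ideal_mult_def is_ideal_def
    by (auto; blast)
qed

lemma IM_prod: "x \<in> I \<Longrightarrow> y \<in> J \<Longrightarrow> x * y \<in> ideal_mult d I J"
  by (auto simp: ideal_mult_def)

lemma IM_least: "is_ideal d L \<Longrightarrow> (\<And>x y. x \<in> I \<Longrightarrow> y \<in> J \<Longrightarrow> x * y \<in> L) \<Longrightarrow> ideal_mult d I J \<subseteq> L"
  by (auto simp: ideal_mult_def)

lemma IM_pr: "a \<in> OK d \<Longrightarrow> b \<in> OK d \<Longrightarrow> ideal_mult d (pr d a) (pr d b) = pr d (a * b)"
proof
  assume a: "a \<in> OK d" and b: "b \<in> OK d"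
  show "ideal_mult d (pr d a) (pr d b) \<subseteq> pr d (a * b)"
  proof (rule IM_least)
    show "is_ideal d (pr d (a * b))" using a b OK_mult pr_ideal by blast
    fix x y assume "x \<in> pr d a" "y \<in> pr d b"
    then obtain x' y' where "x = a * x'" "y = b * y'" "x' \<in> OK d" "y' \<in> OK d" by (auto simp: pr_def)
    then show "x * y \<in> pr d (a * b)" using pr_mem[of "x' * y'" "a * b"] OK_mult by (simp add: mult_ac)
  qed
  show "pr d (a * b) \<subseteq> ideal_mult d (pr d a) (pr d b)"
  proof
    fix z assume "z \<in> pr d (a * b)"
    then obtain r where r: "z = a * b * r" "r \<in> OK d" by (auto simp: pr_def)
    have "a * b \<in> ideal_mult d (pr d a) (pr d b)" by (rule IM_prod) (simp_all add: pr_self)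
    then have "r * (a * b) \<in> ideal_mult d (pr d a) (pr d b)"
      using IM_ideal[OF pr_ideal[OF a] pr_ideal[OF b]] r(2) ideal_mul by blast
    then show "z \<in> ideal_mult d (pr d a) (pr d b)" by (simp add: r mult_ac)
  qed
qed

lemma cs_eq: "is_ideal d I \<Longrightarrow> x - x' \<in> I \<Longrightarrow> cs d I x = cs d I x'"
proof -
  assume I: "is_ideal d I" and h: "x - x' \<in> I"
  have "x - y \<in> I \<longleftrightarrow> x' - y \<in> I" for y
  proof
    assume "x - y \<in> I" then have "(x - y) - (x - x') \<in> I" using ideal_diff[OF I _ h] by blast
    then show "x' - y \<in> I" by simp
  next
    assume "x' - y \<in> I" then have "(x' - y) + (x - x') \<in> I" using ideal_add[OF I _ h] by blast
    then show "x - y \<in> I" by simp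
  qed
  then show ?thesis by (auto simp: cs_def)
qed

lemma cs_eqD: "is_ideal d I \<Longrightarrow> x' \<in> OK d \<Longrightarrow> cs d I x = cs d I x' \<Longrightarrow> x - x' \<in> I"
proof -
  assume I: "is_ideal d I" and x': "x' \<in> OK d" and e: "cs d I x = cs d I x'"
  have "x' \<in> cs d I x'" using x' ideal_0[OF I] by (simp add: cs_def)
  then have "x' \<in> cs d I x" using e by simp
  then show ?thesis by (simp add: cs_def)
qed

lemma ideal_norm_cs: "ideal_norm d I = card (cs d I ` OK d)"
  unfolding ideal_norm_def cs_def by (simp add: Setcompr_eq_image)

lemma Lat_mem: "emb d x y \<in> Lat d e c \<longleftrightarrow> e dvd x - y * c"
proof
  assume "emb d x y \<in> Lat d e c"
  then obtain i j where "emb d x y = emb d (i * e + j * c) j" by (auto simp: Lat_def)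
  then have "x = i * e + j * c" "y = j" by (auto simp: emb_inj)
  then show "e dvd x - y * c" by simp
next
  assume "e dvd x - y * c"
  then obtain i where "x - y * c = e * i" by (auto elim: dvdE)
  then have "emb d x y = emb d (i * e + y * c) y" by (simp add: algebra_simps)
  then show "emb d x y \<in> Lat d e c" by (auto simp: Lat_def)
qed

lemma Lat_sub: "Lat d e c \<subseteq> OK d" by (auto simp: Lat_def)

lemma Lat_memE: "z \<in> Lat d e c \<Longrightarrow> \<exists>x y. z = emb d x y \<and> e dvd x - y * c"
proof -
  assume z: "z \<in> Lat d e c"
  then have "z \<in> OK d" using Lat_sub by blast
  then obtain x y where "z = emb d x y" by (auto simp: OK_iff)
  then show ?thesis using z Lat_mem by blast
qed

lemma Lat_e: "of_int e \<in> Lat d e c"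
  using Lat_mem[of e 0 e c] by (simp add: emb_of_int[symmetric])

lemma Lat_beta: "of_int c + ww d \<in> Lat d e c"
  using Lat_mem[of c 1 e c] by (simp add: emb_def)

lemma Lat_alt: "z \<in> Lat d e c \<longleftrightarrow> (\<exists>i j. z = of_int i * of_int e + of_int j * (of_int c + ww d))"
  by (auto simp: Lat_def emb_def algebra_simps)

lemma Lat_ideal:
  assumes "e dvd nrm d c 1"
  shows "is_ideal d (Lat d e c)"
  unfolding is_ideal_def
proof (intro conjI ballI)
  show "Lat d e c \<subseteq> OK d" by (rule Lat_sub)
  show "0 \<in> Lat d e c" using Lat_mem[of 0 0 e c] by (simp add: emb_0[symmetric])
  fix x y assume "x \<in> Lat d e c" "y \<in> Lat d e c"
  then obtain x1 x2 y1 y2 where "x = emb d x1 x2" "e dvd x1 - x2 * c" "y = emb d y1 y2" "e dvd y1 - y2 * c"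
    using Lat_memE by meson
  then have "e dvd (x1 - x2 * c) + (y1 - y2 * c)" "x + y = emb d (x1 + y1) (x2 + y2)"
    by (simp_all add: emb_add)
  moreover have "(x1 + y1) - (x2 + y2) * c = (x1 - x2 * c) + (y1 - y2 * c)" by (simp add: algebra_simps)
  ultimately show "x + y \<in> Lat d e c"
    by (simp only: Lat_mem)
next
  fix r x assume "r \<in> OK d" "x \<in> Lat d e c"
  obtain x1 x2 where x12: "x = emb d x1 x2" "e dvd x1 - x2 * c"
    using Lat_memE[OF \<open>x \<in> Lat d e c\<close>] by blast
  obtain r1 r2 where r12: "r = emb d r1 r2" using \<open>r \<in> OK d\<close> OK_iff by blast
  note rx = r12 x12
  obtain k0 where "x1 - x2 * c = e * k0" using rx(3) by (auto elim: dvdE)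
  then have k: "x1 = x2 * c + e * k0" by simp
  obtain l where l: "nrm d c 1 = e * l" using assms by (auto elim: dvdE)
  have "(r1 * x1 - mm d * r2 * x2) - (r1 * x2 + r2 * x1 + tt d * r2 * x2) * c
        = e * (r1 * k0 - r2 * (x2 * l + k0 * c))"
  proof -
    have "(r1 * x1 - mm d * r2 * x2) - (r1 * x2 + r2 * x1 + tt d * r2 * x2) * c
        = r1 * (x1 - x2 * c) - r2 * (x2 * (c^2 + tt d * c + mm d) + (x1 - x2 * c) * c)"
      by (simp add: algebra_simps power2_eq_square)
    also have "c^2 + tt d * c + mm d = e * l" using l by (simp add: nrm_def)
    finally show ?thesis by (simp add: k algebra_simps)
  qed
  then show "r * x \<in> Lat d e c" by (simp add: rx emb_mult Lat_mem)
qed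

lemma Lat_norm:
  assumes e: "e > 0" and I: "is_ideal d (Lat d e c)"
  shows "ideal_norm d (Lat d e c) = nat e"
proof -
  let ?L = "Lat d e c"
  let ?f = "\<lambda>r::int. cs d ?L (of_int r)"
  have "cs d ?L ` OK d = ?f ` {0..<e}"
  proof
    show "cs d ?L ` OK d \<subseteq> ?f ` {0..<e}"
    proof
      fix C assume "C \<in> cs d ?L ` OK d"
      then obtain x y where C: "C = cs d ?L (emb d x y)" by (auto simp: OK_iff)
      define r where "r = (x - y * c) mod e"
      have r: "r \<in> {0..<e}" using e by (simp add: r_def)
      have "emb d x y - of_int r = emb d (x - r) y" by (simp add: emb_def algebra_simps)
      moreover have "e dvd (x - r) - y * c"
      proof -
        have "(x - r) - y * c = (x - y * c) - (x - y * c) mod e" by (simp add: r_def algebra_simps)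
        also have "\<dots> = e * ((x - y * c) div e)" by (simp add: minus_mod_eq_mult_div)
        finally show ?thesis by simp
      qed
      ultimately have "emb d x y - of_int r \<in> ?L" by (simp add: Lat_mem)
      then have "C = ?f r" using C cs_eq[OF I] by simp
      then show "C \<in> ?f ` {0..<e}" using r by blast
    qed
    show "?f ` {0..<e} \<subseteq> cs d ?L ` OK d" by auto
  qed
  moreover have "inj_on ?f {0..<e}"
  proof
    fix r r' assume r: "r \<in> {0..<e}" and r': "r' \<in> {0..<e}" and eq: "?f r = ?f r'"
    have "of_int r - of_int r' \<in> ?L" using cs_eqD[OF I _ eq] by simp
    moreover have "(of_int r - of_int r' :: complex) = emb d (r - r') 0" by (simp add: emb_def)
    ultimately have "emb d (r - r') 0 \<in> ?L" by simp
    then have "e dvd r - r'" by (simp add: Lat_mem)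
    then show "r = r'" using r r' 
      by (metis atLeastLessThan_iff mod_pos_pos_trivial mod_eq_dvd_iff)
  qed
  ultimately show ?thesis by (simp add: ideal_norm_cs card_image)
qed

end


context qf
begin

lemma cop_dec:
  assumes "coprime_ideals d P (cnj ` P)" "z \<in> OK d"
  shows "\<exists>x y. x \<in> P \<and> y \<in> P \<and> z = x + cnj y"
proof -
  have "z \<in> {x + y | x y. x \<in> P \<and> y \<in> cnj ` P}" using assms by (simp add: coprime_ideals_def)
  then show ?thesis by blast
qed

lemma emb_zero_iff: "emb d x y = 0 \<longleftrightarrow> x = 0 \<and> y = 0"
  using emb_inj[of x y 0 0] by (simp add: emb_0[symmetric])

lemma HNF:
  assumes I: "is_ideal d P" and nz: "P \<noteq> {0}" and cop: "coprime_ideals d P (cnj ` P)"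
  shows "\<exists>e c. e > 0 \<and> P = Lat d e c \<and> e dvd nrm d c 1 \<and> coprime e (2 * c + tt d)"
proof -
  obtain z where z: "z \<in> P" "z \<noteq> 0" using nz ideal_0[OF I] by blast
  then obtain x y where xy: "z = emb d x y" using ideal_sub[OF I] OK_iff by blast
  have "(x, y) \<noteq> (0, 0)" using z xy emb_zero_iff by auto
  then have np: "nrm d x y > 0" by (rule nrm_pos)
  have "cnj z * z \<in> P" using ideal_mul[OF I _ z(1)] OK_cnj ideal_sub[OF I] z(1) by blast
  then have "of_int (nrm d x y) \<in> P" using emb_norm'[of d x y] by (simp add: xy mult.commute)
  then have posint: "\<exists>k::nat. k > 0 \<and> of_nat k \<in> P"
    using np by (intro exI[of _ "nat (nrm d x y)"]) simp
  define e0 where "e0 = (LEAST k::nat. k > 0 \<and> of_nat k \<in> P)"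
  have e0: "e0 > 0 \<and> of_nat e0 \<in> P" unfolding e0_def using posint by (rule LeastI_ex)
  define e where "e = int e0"
  have epos: "e > 0" using e0 by (simp add: e_def)
  have eP: "of_int e \<in> P" using e0 by (simp add: e_def)
  have mult: "e dvd k" if k: "of_int k \<in> P" for k
  proof -
    define r where "r = k mod e"
    have "r = k - k div e * e" by (simp add: r_def minus_div_mult_eq_mod)
    then have "of_int r = of_int k - of_int (k div e) * (of_int e :: complex)" by simp
    then have rP: "of_int r \<in> P" using ideal_diff[OF I k ideal_int[OF I eP]] by simp
    have r0: "r \<ge> 0" "r < e" using epos by (simp_all add: r_def)
    have "r = 0"
    proof (rule ccontr)
      assume "r \<noteq> 0"
      then have "nat r > 0 \<and> of_nat (nat r) \<in> P" using r0 rP by simp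
      then have "e0 \<le> nat r" unfolding e0_def by (rule Least_le)
      then show False using r0 by (simp add: e_def)
    qed
    then show ?thesis by (simp add: r_def dvd_eq_mod_eq_0)
  qed
  obtain u' v' where uv: "u' \<in> P" "v' \<in> P" "ww d = u' + cnj v'" using cop_dec[OF cop OK_ww] by blast
  obtain a1 a2 where a: "u' = emb d a1 a2" using uv(1) ideal_sub[OF I] OK_iff by blast
  obtain b1 b2 where b: "v' = emb d b1 b2" using uv(2) ideal_sub[OF I] OK_iff by blast
  have "emb d 0 1 = emb d (a1 + (b1 + tt d * b2)) (a2 + - b2)" using uv(3) by (simp add: a b emb_cnj emb_add emb_ww)
  then have a2: "a2 - b2 = 1" by (simp add: emb_inj)
  define c where "c = a1 - b1"
  have "u' - v' = emb d c 1" by (simp add: a b emb_diff c_def a2)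
  moreover have "u' - v' \<in> P" using ideal_diff[OF I uv(1,2)] .
  ultimately have betaP: "emb d c 1 \<in> P" by simp
  have PL: "P = Lat d e c"
  proof
    show "P \<subseteq> Lat d e c"
    proof
      fix z assume zP: "z \<in> P"
      then obtain x y where z: "z = emb d x y" using ideal_sub[OF I] OK_iff by blast
      have "z - of_int y * emb d c 1 \<in> P" using ideal_diff[OF I zP ideal_int[OF I betaP]] .
      moreover have "z - of_int y * emb d c 1 = of_int (x - y * c)" by (simp add: z emb_def algebra_simps)
      ultimately have "e dvd x - y * c" using mult by simp
      then show "z \<in> Lat d e c" by (simp add: z Lat_mem)
    qed
    show "Lat d e c \<subseteq> P"
    proof
      fix z assume "z \<in> Lat d e c"
      then obtain i j where z: "z = of_int i * of_int e + of_int j * (of_int c + ww d)" by (auto simp: Lat_alt)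
      have "of_int c + ww d = emb d c 1" by (simp add: emb_def)
      then have "z = of_int i * of_int e + of_int j * emb d c 1" using z by simp
      then show "z \<in> P" using ideal_add[OF I ideal_int[OF I eP] ideal_int[OF I betaP]]
        by simp
    qed
  qed
  have "cnj (emb d c 1) * emb d c 1 \<in> P" using ideal_mul[OF I _ betaP] OK_cnj by simp
  then have "of_int (nrm d c 1) \<in> P" using emb_norm'[of d c 1] by (simp add: mult.commute)
  then have dn: "e dvd nrm d c 1" by (rule mult)
  obtain u'' v'' where uv2: "u'' \<in> P" "v'' \<in> P" "1 = u'' + cnj v''" using cop_dec[OF cop OK_1] by blast
  obtain x1 y1 where 1: "u'' = emb d x1 y1" "e dvd x1 - y1 * c" using uv2(1) PL Lat_memE by blast
  obtain x2 y2 where 2: "v'' = emb d x2 y2" "e dvd x2 - y2 * c" using uv2(2) PL Lat_memE by blast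
  have "emb d 1 0 = emb d (x1 + (x2 + tt d * y2)) (y1 + - y2)" using uv2(3) by (simp add: 1 2 emb_cnj emb_add emb_1[symmetric])
  then have y12: "y1 = y2" and x12: "x1 + x2 + tt d * y2 = 1" by (simp_all add: emb_inj)
  obtain k1 where k1: "x1 - y1 * c = e * k1" using 1(2) by (auto elim: dvdE)
  obtain k2 where k2: "x2 - y2 * c = e * k2" using 2(2) by (auto elim: dvdE)
  have "(k1 + k2) * e + y1 * (2 * c + tt d) = 1"
  proof -
    have x1e: "x1 = y1 * c + e * k1" using k1 by simp
    have x2e: "x2 = y2 * c + e * k2" using k2 by simp
    show ?thesis using x12 by (simp add: x1e x2e y12 algebra_simps)
  qed
  then have "coprime e (2 * c + tt d)" by (rule bez_coprime)
  with epos PL dn show ?thesis by blast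
qed

end


context qf
begin

lemma OK_num [simp]: "numeral n \<in> OK d" using OK_int[of "numeral n"] by simp

lemmas OK_cl = OK_num OK_add OK_mult OK_cnj OK_diff OK_minus OK_int OK_emb OK_ww OK_0 OK_1

lemma Lat_prod_e:
  assumes "x \<in> Lat d e c" "y \<in> Lat d e c" "nrm d c 1 = e * k"
  shows "\<exists>s \<in> OK d. x * cnj y = of_int e * s"
proof -
  let ?b = "emb d c 1"
  have b: "of_int c + ww d = ?b" by (simp add: emb_def)
  obtain i j where x: "x = of_int i * of_int e + of_int j * ?b" using assms(1) by (auto simp: Lat_alt b)
  obtain i' j' where y: "y = of_int i' * of_int e + of_int j' * ?b" using assms(2) by (auto simp: Lat_alt b)
  have Nb: "?b * cnj ?b = of_int e * of_int k" using emb_norm'[of d c 1] assms(3) by simp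
  define s where "s = of_int i * of_int i' * of_int e + of_int i * of_int j' * cnj ?b
     + of_int j * of_int i' * ?b + of_int j * of_int j' * of_int k"
  have "x * cnj y = of_int i * of_int i' * of_int e * of_int e + of_int i * of_int j' * of_int e * cnj ?b
     + of_int j * of_int i' * of_int e * ?b + of_int j * of_int j' * (?b * cnj ?b)"
    by (simp add: x y algebra_simps)
  also have "\<dots> = of_int e * s" by (simp add: Nb s_def algebra_simps)
  finally have "x * cnj y = of_int e * s" .
  moreover have "s \<in> OK d" unfolding s_def by (intro OK_cl)
  ultimately show ?thesis by blast
qed

lemma J_facts:
  assumes J: "P \<in> Jset d" and g: "g \<in> OK d" and P2: "ideal_mult d P P = pr d g"
  shows "\<exists>e c. e > 1 \<and> P = Lat d e c \<and> e dvd nrm d c 1 \<and> g * cnj g = of_int (e^2)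
           \<and> P = {of_int e * s + g * t | s t. s \<in> OK d \<and> t \<in> OK d}
           \<and> (\<forall>T. g + cnj g = of_int T \<longrightarrow> coprime e T)"
proof -
  have I: "is_ideal d P" and nz: "P \<noteq> {0}" and nO: "P \<noteq> OK d"
    and cop: "coprime_ideals d P (cnj ` P)" using J by (auto simp: Jset_def)
  obtain e c where ec: "e > 0" "P = Lat d e c" "e dvd nrm d c 1" "coprime e (2 * c + tt d)"
    using HNF[OF I nz cop] by blast
  obtain k where k: "nrm d c 1 = e * k" using ec(3) by (auto elim: dvdE)
  define b where "b = emb d c 1"
  have bOK: "b \<in> OK d" by (simp add: b_def)
  have eP: "of_int e \<in> P" using Lat_e ec(2) by simp
  have bP: "b \<in> P" using Lat_beta ec(2) by (simp add: b_def emb_def)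
  have Nb: "b * cnj b = of_int e * of_int k" using emb_norm'[of d c 1] k by (simp add: b_def)
  have Tb: "b + cnj b = of_int (2 * c + tt d)" using emb_trace[of d c 1] by (simp add: b_def)
  have prod: "\<exists>r \<in> OK d. x * y = g * r" if "x \<in> P" "y \<in> P" for x y
  proof -
    have "x * y \<in> pr d g" using IM_prod[OF that] P2 by simp
    then show ?thesis by (auto simp: pr_def)
  qed
  have P2sub: "ideal_mult d P P \<subseteq> P"
    by (rule IM_least[OF I]) (rule ideal_mul'[OF I], auto simp: ideal_sub[OF I, THEN subsetD])
  have gP: "g \<in> P" using P2sub P2 pr_self by blast
  \<comment> \<open>(A) g * cnj g is divisible by e^2\<close>
  define S where "S = {of_int e * of_int e * a + of_int e * b * b' + b * b * c' | a b' c'. a \<in> OK d \<and> b' \<in> OK d \<and> c' \<in> OK d}"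
  have S_ideal: "is_ideal d S"
    unfolding is_ideal_def
  proof (intro conjI ballI)
    show "S \<subseteq> OK d" unfolding S_def using bOK by (auto intro!: OK_cl)
    show "0 \<in> S" unfolding S_def by (rule CollectI, intro exI[of _ 0]) simp
    fix x y assume "x \<in> S" "y \<in> S"
    then obtain a1 b1 c1 a2 b2 c2 where
      "x = of_int e * of_int e * a1 + of_int e * b * b1 + b * b * c1" "a1 \<in> OK d" "b1 \<in> OK d" "c1 \<in> OK d"
      "y = of_int e * of_int e * a2 + of_int e * b * b2 + b * b * c2" "a2 \<in> OK d" "b2 \<in> OK d" "c2 \<in> OK d"
      unfolding S_def by blast
    then have "x + y = of_int e * of_int e * (a1 + a2) + of_int e * b * (b1 + b2) + b * b * (c1 + c2)"
      "a1 + a2 \<in> OK d" "b1 + b2 \<in> OK d" "c1 + c2 \<in> OK d" by (simp_all add: OK_add algebra_simps)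
    then show "x + y \<in> S" unfolding S_def by blast
  next
    fix r x assume "r \<in> OK d" "x \<in> S"
    then obtain a1 b1 c1 where
      "x = of_int e * of_int e * a1 + of_int e * b * b1 + b * b * c1" "a1 \<in> OK d" "b1 \<in> OK d" "c1 \<in> OK d"
      unfolding S_def by blast
    then have "r * x = of_int e * of_int e * (r * a1) + of_int e * b * (r * b1) + b * b * (r * c1)"
      "r * a1 \<in> OK d" "r * b1 \<in> OK d" "r * c1 \<in> OK d" using \<open>r \<in> OK d\<close> by (simp_all add: OK_mult algebra_simps)
    then show "r * x \<in> S" unfolding S_def by blast
  qed
  have "ideal_mult d P P \<subseteq> S"
  proof (rule IM_least[OF S_ideal])
    fix x y assume "x \<in> P" "y \<in> P"
    then obtain i j i' j' where x: "x = of_int i * of_int e + of_int j * b" and y: "y = of_int i' * of_int e + of_int j' * b"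
      using ec(2) by (auto simp: Lat_alt b_def emb_def)
    have "x * y = of_int e * of_int e * of_int (i * i') + of_int e * b * of_int (i * j' + j * i') + b * b * of_int (j * j')"
      by (simp add: x y algebra_simps)
    moreover have "of_int (i * i') \<in> OK d" "of_int (i * j' + j * i') \<in> OK d" "of_int (j * j') \<in> OK d" by (rule OK_int)+
    ultimately show "x * y \<in> S" unfolding S_def by blast
  qed
  then have "g \<in> S" using P2 pr_self by blast
  then obtain a b' c' where gS: "g = of_int e * of_int e * a + of_int e * b * b' + b * b * c'" "a \<in> OK d" "b' \<in> OK d" "c' \<in> OK d"
    unfolding S_def by blast
  define V where "V = of_int e * of_int e * a * cnj a + of_int e * cnj b * a * cnj b' + cnj b * cnj b * a * cnj c'
     + of_int e * b * b' * cnj a + of_int e * of_int k * b' * cnj b' + of_int k * cnj b * b' * cnj c'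
     + b * b * c' * cnj a + of_int k * b * c' * cnj b' + of_int k * of_int k * c' * cnj c'"
  define Q where "Q = of_int e * of_int e * b' * cnj b' + of_int e * cnj b * b' * cnj c' + of_int e * b * c' * cnj b'
     + c' * cnj c' * (b * cnj b + of_int e * of_int k)"
  have cg: "cnj g = of_int e * of_int e * cnj a + of_int e * cnj b * cnj b' + cnj b * cnj b * cnj c'"
    by (simp add: gS)
  have "g * cnj g - of_int e * of_int e * V = (b * cnj b - of_int e * of_int k) * Q"
    unfolding cg unfolding gS(1) V_def Q_def by algebra
  then have gV: "g * cnj g = of_int e * of_int e * V" using Nb by simp
  have VOK: "V \<in> OK d" unfolding V_def using gS(2-4) bOK by (intro OK_cl)
  \<comment> \<open>(B) e^2 is divisible by g * cnj g\<close>
  obtain r1 where r1: "r1 \<in> OK d" "of_int e * of_int e = g * r1" using prod[OF eP eP] by blast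
  obtain r2 where r2: "r2 \<in> OK d" "of_int e * b = g * r2" using prod[OF eP bP] by blast
  obtain r3 where r3: "r3 \<in> OK d" "b * b = g * r3" using prod[OF bP bP] by blast
  have r1c: "of_int e * of_int e = cnj g * cnj r1" using arg_cong[OF r1(2), of cnj] by simp
  have r2c: "of_int e * cnj b = cnj g * cnj r2" using arg_cong[OF r2(2), of cnj] by simp
  have r3c: "cnj b * cnj b = cnj g * cnj r3" using arg_cong[OF r3(2), of cnj] by simp
  obtain u v where uv: "u * e + v * (2 * c + tt d) = 1" using coprime_bez[OF ec(4)] by blast
  have uvc: "of_int u * of_int e + of_int v * (b + cnj b) = (1::complex)"
    unfolding Tb using arg_cong[OF uv, of "of_int :: int \<Rightarrow> complex"] by simp
  define W where "W = of_int u * of_int u * r1 * cnj r1 + of_int v * of_int v * r3 * cnj r1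
     + of_int v * of_int v * r1 * cnj r3 + 2 * of_int u * of_int v * cnj r1 * r2
     + 2 * of_int u * of_int v * r1 * cnj r2 + 2 * of_int v * of_int v * r2 * cnj r2"
  have WOK: "W \<in> OK d" unfolding W_def using r1(1) r2(1) r3(1) by (intro OK_cl)
  have "g * cnj g * W = of_int u * of_int u * (g * r1) * (cnj g * cnj r1)
     + of_int v * of_int v * (cnj g * cnj r1) * (g * r3)
     + of_int v * of_int v * (g * r1) * (cnj g * cnj r3)
     + 2 * of_int u * of_int v * (cnj g * cnj r1) * (g * r2)
     + 2 * of_int u * of_int v * (g * r1) * (cnj g * cnj r2)
     + 2 * of_int v * of_int v * (g * r2) * (cnj g * cnj r2)"
    unfolding W_def by algebra
  also have "\<dots> = of_int u * of_int u * (of_int e * of_int e) * (of_int e * of_int e)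
     + of_int v * of_int v * (of_int e * of_int e) * (b * b)
     + of_int v * of_int v * (of_int e * of_int e) * (cnj b * cnj b)
     + 2 * of_int u * of_int v * (of_int e * of_int e) * (of_int e * b)
     + 2 * of_int u * of_int v * (of_int e * of_int e) * (of_int e * cnj b)
     + 2 * of_int v * of_int v * (of_int e * b) * (of_int e * cnj b)"
    by (simp only: r1(2)[symmetric] r2(2)[symmetric] r3(2)[symmetric] r1c[symmetric] r2c[symmetric] r3c[symmetric])
  also have "\<dots> = (of_int e * (of_int u * of_int e + of_int v * (b + cnj b)))^2"
    by algebra
  also have "\<dots> = of_int e * of_int e" using uvc by (simp add: power2_eq_square)
  finally have gW: "g * cnj g * W = of_int e * of_int e" .
  have "of_int e * of_int e * (V * W) = of_int e * of_int e * 1"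
    using gV gW by (simp add: mult.assoc[symmetric])
  then have VW: "V * W = 1" using ec(1) by simp
  have "V = 1 \<or> V = -1" using unit_OK[OF VOK WOK VW] .
  moreover have "V \<noteq> -1"
  proof
    assume "V = -1"
    obtain gx gy where gxy: "g = emb d gx gy" using g OK_iff by blast
    have "of_int (nrm d gx gy) = (of_int (- (e * e)) :: complex)"
      using gV \<open>V = -1\<close> emb_norm'[of d gx gy] by (simp add: gxy)
    then have "nrm d gx gy = - (e * e)" by (simp only: of_int_eq_iff)
    then show False using nrm_nonneg[of gx gy] ec(1) by (smt (verit) mult_pos_pos)
  qed
  ultimately have "V = 1" by simp
  with gV have gg: "g * cnj g = of_int (e^2)" by (simp add: power2_eq_square)
  have PC: "P = {of_int e * s + g * t | s t. s \<in> OK d \<and> t \<in> OK d}"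
  proof
    show "P \<subseteq> {of_int e * s + g * t | s t. s \<in> OK d \<and> t \<in> OK d}"
    proof
      fix x assume xP: "x \<in> P"
      obtain u' v' where uv': "u' \<in> P" "v' \<in> P" "1 = u' + cnj v'" using cop_dec[OF cop OK_1] by blast
      obtain t where t: "t \<in> OK d" "x * u' = g * t" using prod[OF xP uv'(1)] by blast
      obtain s where s: "s \<in> OK d" "x * cnj v' = of_int e * s"
        using Lat_prod_e[OF _ _ k, of x v'] xP uv'(2) ec(2) by blast
      have "x = x * u' + x * cnj v'" using uv'(3) by (metis distrib_left mult.right_neutral)
      also have "\<dots> = of_int e * s + g * t" using s t by simp
      finally show "x \<in> {of_int e * s + g * t | s t. s \<in> OK d \<and> t \<in> OK d}" using s t by blast
    qed
    show "{of_int e * s + g * t | s t. s \<in> OK d \<and> t \<in> OK d} \<subseteq> P"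
      using ideal_add[OF I ideal_mul'[OF I _ eP] ideal_mul'[OF I _ gP]] by auto
  qed
  have "e \<noteq> 1"
  proof
    assume "e = 1"
    then have "Lat d e c = OK d" using Lat_sub by (auto simp: OK_iff Lat_mem)
    then show False using nO ec(2) by simp
  qed
  then have e1: "e > 1" using ec(1) by simp
  have cpT: "coprime e T" if T: "g + cnj g = of_int T" for T
  proof (rule coprimeI)
    fix q assume qe: "q dvd e" and qT: "q dvd T"
    obtain e' where e': "e = q * e'" using qe by (auto elim: dvdE)
    obtain T' where T': "T = q * T'" using qT by (auto elim: dvdE)
    obtain u' v' where uv': "u' \<in> P" "v' \<in> P" "1 = u' + cnj v'" using cop_dec[OF cop OK_1] by blast
    obtain s1 t1 where st1: "s1 \<in> OK d" "t1 \<in> OK d" "u' = of_int e * s1 + g * t1" using uv'(1) PC by blast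
    obtain s2 t2 where st2: "s2 \<in> OK d" "t2 \<in> OK d" "v' = of_int e * s2 + g * t2" using uv'(2) PC by blast
    have cg': "cnj g = of_int T - g" using T by (simp add: algebra_simps)
    define Z where "Z = of_int e' * (s1 + cnj s2) + of_int T' * cnj t2"
    define Y where "Y = t1 - cnj t2"
    have one: "1 = of_int q * Z + g * Y"
    proof -
      have "1 = of_int e * s1 + g * t1 + (of_int e * cnj s2 + cnj g * cnj t2)"
        using uv'(3) by (simp add: st1 st2)
      also have "\<dots> = of_int q * Z + g * Y" unfolding cg' Z_def Y_def by (simp add: e' T' algebra_simps)
      finally show ?thesis .
    qed
    define Z2 where "Z2 = Z * cnj g + of_int e' * of_int e * Y"
    have "cnj g = cnj g * (of_int q * Z + g * Y)" using one by simp
    also have "\<dots> = of_int q * Z * cnj g + (g * cnj g) * Y" by (simp add: algebra_simps)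
    also have "\<dots> = of_int q * Z2" by (simp add: gg Z2_def e' power2_eq_square algebra_simps)
    finally have cgq: "cnj g = of_int q * Z2" .
    have g2: "g = of_int q * (of_int T' - Z2)" using cg' cgq T' by (simp add: algebra_simps)
    have "1 = of_int q * Z + g * Y" by (rule one)
    also have "\<dots> = of_int q * (Z + (of_int T' - Z2) * Y)" by (subst g2) (simp add: algebra_simps)
    finally have "1 = of_int q * (Z + (of_int T' - Z2) * Y)" .
    moreover have "Z + (of_int T' - Z2) * Y \<in> OK d"
      unfolding Z2_def Z_def Y_def using st1 st2 g by (intro OK_cl)
    ultimately have "q dvd 1" using int_in_intOK[of 1 q] by simp
    then show "is_unit q" .
  qed
  show ?thesis using e1 ec(2) ec(3) gg PC cpT by blast
qed

end


definition Rec :: "nat \<Rightarrow> int \<times> int \<times> int \<Rightarrow> complex set" where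
  "Rec d s = (case s of (n, a, b) \<Rightarrow>
     {of_int n * x + (of_int a + of_int b * sqm d) / 2 * y | x y. x \<in> OK d \<and> y \<in> OK d})"

context qf
begin

lemma pr_neg: "pr d (- x) = pr d x"
proof -
  have "pr d (- x) \<subseteq> pr d x" for x
  proof
    fix z assume "z \<in> pr d (- x)"
    then obtain t where "z = - x * t" "t \<in> OK d" by (auto simp: pr_def)
    then have "z = x * (- t)" "- t \<in> OK d" by (simp_all add: OK_minus)
    then show "z \<in> pr d x" unfolding pr_def by blast
  qed
  from this[of x] this[of "- x"] show ?thesis by auto
qed

lemma ab_unique:
  assumes "a > 0" "a' > 0"
    and eq: "pr d (of_int a + of_int b * sqm d) = pr d (of_int a' + of_int b' * sqm d)"
  shows "a = a' \<and> b = b'"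
proof -
  let ?x = "of_int a + of_int b * sqm d" and ?y = "of_int a' + of_int b' * sqm d"
  have "?x \<in> pr d ?y" using eq pr_self by blast
  then obtain r where r: "?x = ?y * r" "r \<in> OK d" by (auto simp: pr_def)
  have "?y \<in> pr d ?x" using eq pr_self by blast
  then obtain r' where r': "?y = ?x * r'" "r' \<in> OK d" by (auto simp: pr_def)
  have x0: "?x \<noteq> 0"
  proof
    assume "?x = 0"
    then have "Re ?x = 0" by simp
    then show False using assms(1) by simp
  qed
  have "?x * 1 = ?x * (r' * r)" using r r' by (simp add: mult_ac)
  then have "r' * r = 1" using x0 by (metis mult_cancel_left)
  then have "r = 1 \<or> r = -1" using unit_OK[OF r(2) r'(2)] by (simp add: mult.commute)
  moreover have "r \<noteq> -1"
  proof
    assume "r = -1"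
    then have "Re ?x = - Re ?y" using r by simp
    then show False using assms by simp
  qed
  ultimately have "?x = ?y" using r by simp
  then show ?thesis by (rule sqm_inj)
qed

lemma ab_of_eq:
  assumes "a > 0" "two_sq d P = pr d (of_int a + of_int b * sqm d)"
  shows "ab_of d P = (a, b)"
  unfolding ab_of_def
proof (rule the_equality)
  show "case (a, b) of (a, b) \<Rightarrow> 0 < a \<and> two_sq d P = {(of_int a + of_int b * sqm d) * x |x. x \<in> OK d}"
    using assms by (simp add: pr_def)
  fix p assume p: "case p of (a, b) \<Rightarrow> 0 < a \<and> two_sq d P = {(of_int a + of_int b * sqm d) * x |x. x \<in> OK d}"
  obtain a' b' where pab: "p = (a', b')" by (cases p)
  have "a' > 0" "pr d (of_int a' + of_int b' * sqm d) = pr d (of_int a + of_int b * sqm d)"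
    using p assms by (simp_all add: pab pr_def)
  then show "p = (a, b)" using ab_unique[OF _ assms(1)] by (simp add: pab)
qed

lemma two_sq_pr: "g \<in> OK d \<Longrightarrow> ideal_mult d P P = pr d g \<Longrightarrow> two_sq d P = pr d (2 * g)"
  unfolding two_sq_def using IM_pr[of 2 g] by (simp add: pr_def[symmetric])

lemma J_forward:
  assumes J: "P \<in> Jset d"
  shows "theta d P \<in> primitive_solutions d \<and> P = Rec d (theta d P)"
proof -
  obtain g where g: "g \<in> OK d" "ideal_mult d P P = pr d g"
    using J by (auto simp: Jset_def principal_def pr_def)
  obtain e c where ec: "e > 1" "P = Lat d e c" "e dvd nrm d c 1" "g * cnj g = of_int (e^2)"
     "P = {of_int e * s + g * t | s t. s \<in> OK d \<and> t \<in> OK d}"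
     and cpT: "\<And>T. g + cnj g = of_int T \<Longrightarrow> coprime e T"
    using J_facts[OF J g] by blast
  obtain gx gy where gxy: "g = emb d gx gy" using g(1) OK_iff by blast
  define T where "T = 2 * gx + tt d * gy"
  have cT: "coprime e T" using cpT emb_trace[of d gx gy] by (simp add: gxy T_def)
  have ng: "nrm d gx gy = e^2" using ec(4) emb_norm'[of d gx gy] by (simp add: gxy flip: of_int_power)
  have twog: "2 * g = of_int T + of_int (sc d * gy) * sqm d" by (simp add: gxy emb_half T_def)
  have T0: "T \<noteq> 0"
  proof
    assume "T = 0"
    then have "is_unit e" using cT by simp
    then show False using ec(1) by simp
  qed
  have gy0: "gy \<noteq> 0"
  proof
    assume "gy = 0"
    then have "gx^2 = e^2" using ng by (simp add: nrm_def)
    then have "gx = e \<or> gx = - e" by (simp add: power2_eq_iff)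
    then have "e dvd T" using \<open>gy = 0\<close> by (auto simp: T_def)
    then have "is_unit e" using cT by (metis coprime_common_divisor dvd_refl)
    then show False using ec(1) by simp
  qed
  have I: "is_ideal d P" using J by (simp add: Jset_def)
  have nP: "ideal_norm d P = nat e" using Lat_norm[of e c] ec(1,2) I by simp
  have tsq: "two_sq d P = pr d (2 * g)" by (rule two_sq_pr[OF g])
  obtain a b where ab: "a > 0" "of_int a + of_int b * sqm d = 2 * g \<or> of_int a + of_int b * sqm d = - (2 * g)"
    "a = T \<or> a = - T" "b = sc d * gy \<or> b = - (sc d * gy)"
  proof (cases "T > 0")
    case True
    then show ?thesis using that[of T "sc d * gy"] twog by simp
  next
    case False
    then have "- T > 0" using T0 by simp
    moreover have "of_int (- T) + of_int (- (sc d * gy)) * sqm d = - (2 * g)" using twog by simp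
    ultimately show ?thesis using that[of "- T" "- (sc d * gy)"] by simp
  qed
  have "two_sq d P = pr d (of_int a + of_int b * sqm d)" using ab(2) tsq pr_neg by auto
  then have abP: "ab_of d P = (a, b)" using ab_of_eq ab(1) by simp
  have th: "theta d P = (e, a, b)" using ec(1) by (simp add: theta_def nP abP)
  have sol: "is_solution d (e, a, b)"
  proof -
    have "b \<noteq> 0" using ab(4) gy0 sc_pos[of d] by auto
    moreover have "4 * e^2 = a^2 + int d * b^2"
    proof -
      have "a^2 + int d * b^2 = T^2 + int d * sc d ^ 2 * gy ^2" using ab(3,4)
        by (auto simp: power2_eq_square algebra_simps)
      also have "\<dots> = 4 * nrm d gx gy" by (simp add: nrm4 T_def)
      finally show ?thesis by (simp add: ng)
    qed
    ultimately show ?thesis using ec(1) ab(1) by (simp add: is_solution_def)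
  qed
  have "gcd e a = 1" using cT ab(3) by auto
  then have prim: "theta d P \<in> primitive_solutions d" using sol th by (simp add: primitive_solutions_def)
  have "P = Rec d (e, a, b)"
  proof -
    have "(of_int a + of_int b * sqm d) / 2 = g \<or> (of_int a + of_int b * sqm d) / 2 = - g"
      using ab(2) by auto
    then show ?thesis
    proof
      assume h: "(of_int a + of_int b * sqm d) / 2 = g"
      show ?thesis unfolding Rec_def prod.case by (subst h) (rule ec(5))
    next
      assume h: "(of_int a + of_int b * sqm d) / 2 = - g"
      have "{of_int e * s + g * t | s t. s \<in> OK d \<and> t \<in> OK d}
          = {of_int e * x + - g * y | x y. x \<in> OK d \<and> y \<in> OK d}"
      proof (intro equalityI subsetI)
        fix z assume "z \<in> {of_int e * s + g * t | s t. s \<in> OK d \<and> t \<in> OK d}"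
        then obtain s t where "z = of_int e * s + - g * (- t)" "s \<in> OK d" "- t \<in> OK d"
          using OK_minus by fastforce
        then show "z \<in> {of_int e * x + - g * y | x y. x \<in> OK d \<and> y \<in> OK d}" by blast
      next
        fix z assume "z \<in> {of_int e * x + - g * y | x y. x \<in> OK d \<and> y \<in> OK d}"
        then obtain s t where "z = of_int e * s + g * (- t)" "s \<in> OK d" "- t \<in> OK d"
          using OK_minus by fastforce
        then show "z \<in> {of_int e * s + g * t | s t. s \<in> OK d \<and> t \<in> OK d}" by blast
      qed
      then show ?thesis unfolding Rec_def prod.case by (subst h) (rule trans[OF ec(5)])
    qed
  qed
  with prim th show ?thesis by simp
qed

lemma theta_inj: "inj_on (theta d) (Jset d)"
proof
  fix P Q assume "P \<in> Jset d" "Q \<in> Jset d" "theta d P = theta d Q"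
  then show "P = Q" using J_forward by metis
qed

end


context qf
begin

lemma Lat_coprime:
  assumes cp: "coprime e (2 * c + tt d)"
  shows "coprime_ideals d (Lat d e c) (cnj ` Lat d e c)"
  unfolding coprime_ideals_def
proof (intro equalityI subsetI)
  fix z assume "z \<in> {x + y |x y. x \<in> Lat d e c \<and> y \<in> cnj ` Lat d e c}"
  then obtain x y where "z = x + cnj y" "x \<in> Lat d e c" "y \<in> Lat d e c" by blast
  then show "z \<in> OK d" using Lat_sub OK_add OK_cnj by blast
next
  fix z assume "z \<in> OK d"
  then obtain z1 z2 where z: "z = emb d z1 z2" using OK_iff by blast
  obtain l m where lm: "l * e + m * (2 * c + tt d) = 1" using coprime_bez[OF cp] by blast
  let ?b = "of_int c + ww d"
  have Tb: "?b + cnj ?b = of_int (2 * c + tt d)" by (simp add: cnj_ww)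
  have one: "of_int l * of_int e + of_int m * (?b + cnj ?b) = (1::complex)"
    unfolding Tb using arg_cong[OF lm, of "of_int :: int \<Rightarrow> complex"] by simp
  define x where "x = of_int ((z1 - z2 * c) * l) * of_int e + of_int (z1 * m + z2 - z2 * c * m) * ?b"
  define y where "y = of_int (0::int) * of_int e + of_int ((z1 - z2 * c) * m) * ?b"
  have xL: "x \<in> Lat d e c" unfolding x_def Lat_alt by blast
  have yL: "y \<in> Lat d e c" unfolding y_def Lat_alt by blast
  have "x + cnj y = of_int (z1 - z2 * c) * (of_int l * of_int e + of_int m * (?b + cnj ?b)) + of_int z2 * ?b"
    by (simp add: x_def y_def algebra_simps)
  also have "\<dots> = z" using one by (simp add: z emb_def algebra_simps)
  finally show "z \<in> {x + y |x y. x \<in> Lat d e c \<and> y \<in> cnj ` Lat d e c}" using xL yL by blast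
qed

lemma sol_n_ne1:
  assumes "a > 0" "b \<noteq> 0" "4 * 1^2 = a^2 + int d * b^2"
  shows False
proof -
  have b1: "b^2 \<ge> 1" using assms(2) by (simp add: int_one_le_iff_zero_less)
  have h: "int d * 1 \<le> int d * b^2" by (rule mult_left_mono[OF b1]) simp
  then have db: "int d * b^2 \<ge> 2" using d_ge2 by linarith
  then have "a^2 \<le> 2" using assms(3) by simp
  then have "a = 1"
  proof -
    have "a < 2"
    proof (rule ccontr)
      assume "\<not> a < 2"
      then have "a * a \<ge> 2 * 2" by (intro mult_mono) simp_all
      then show False using \<open>a^2 \<le> 2\<close> by (simp add: power2_eq_square)
    qed
    then show ?thesis using assms(1) by simp
  qed
  then have e3: "int d * b^2 = 3" using assms(3) by simp
  show False
  proof (cases "b^2 = 1")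
    case True
    then show False using e3 d3 by simp
  next
    case False
    then have "b^2 \<ge> 2" using b1 by simp
    then have "int d * b^2 \<ge> 2 * 2" using d_ge2 by (intro mult_mono) simp_all
    then show False using e3 by simp
  qed
qed

lemma J_surj:
  assumes s: "s \<in> primitive_solutions d"
  shows "\<exists>P \<in> Jset d. theta d P = s"
proof -
  obtain n a b where sab: "s = (n, a, b)" by (cases s)
  have n0: "n > 0" and a0: "a > 0" and b0: "b \<noteq> 0" and eq: "4 * n^2 = a^2 + int d * b^2"
    and gna: "gcd n a = 1"
    using s by (auto simp: sab primitive_solutions_def is_solution_def)
  have cna: "coprime n a" using gna by (simp add: coprime_iff_gcd_eq_1)
  have "4 dvd a^2 + int d * b^2" using eq by (metis dvd_triv_left)
  then obtain gx gy where gxy: "(of_int a + of_int b * sqm d) / 2 = emb d gx gy"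
    using half_emb[OF sq] by blast
  define g where "g = emb d gx gy"
  have g2: "2 * g = of_int a + of_int b * sqm d" using gxy by (simp add: g_def)
  have "of_int a + of_int b * sqm d = of_int (2 * gx + tt d * gy) + of_int (sc d * gy) * sqm d"
    using g2 by (simp add: g_def emb_half)
  then have ab: "a = 2 * gx + tt d * gy" "b = sc d * gy" using sqm_inj by blast+
  have ng: "nrm d gx gy = n^2"
  proof -
    have "4 * nrm d gx gy = a^2 + int d * b^2" by (simp add: nrm4 ab power2_eq_square algebra_simps)
    then show ?thesis using eq by simp
  qed
  have gg: "g * cnj g = of_int n * of_int n" using emb_norm'[of d gx gy] by (simp add: g_def ng power2_eq_square)
  have gtr: "g + cnj g = of_int a" using emb_trace[of d gx gy] by (simp add: g_def ab)
  have cgn: "coprime gy n"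
  proof (rule ccontr)
    assume "\<not> coprime gy n"
    then obtain q where q: "q dvd gy" "q dvd n" "\<not> is_unit q" by (rule not_coprimeE)
    have "q \<noteq> 0" using q(2) n0 by auto
    then obtain p where p: "p dvd q" "prime p" using prime_divisor_exists q(3) by blast
    have pgy: "p dvd gy" and pn: "p dvd n" using p q dvd_trans by blast+
    have "gx^2 = n^2 - tt d * gx * gy - mm d * gy^2" using ng by (simp add: nrm_def)
    moreover have "p dvd n^2 - tt d * gx * gy - mm d * gy^2" using pgy pn by (simp add: power2_eq_square)
    ultimately have "p dvd gx^2" by simp
    then have "p dvd gx" using p(2) prime_dvd_power by blast
    then have "p dvd a" using pgy by (simp add: ab)
    then have "is_unit p" using pn cna coprime_common_divisor by blast
    then show False using p(2) not_prime_unit by blast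
  qed
  obtain u v where uv: "u * gy + v * n = 1" using coprime_bez[OF cgn] by blast
  define c where "c = u * gx"
  define k where "k = u^2 * n + tt d * u * gx * v + mm d * v * (1 + u * gy)"
  have vn: "v * n = 1 - u * gy" using uv by simp
  have nk: "nrm d c 1 = n * k"
  proof -
    have "n * k = u^2 * n^2 + tt d * u * gx * (v * n) + mm d * (v * n) * (1 + u * gy)"
      by (simp add: k_def algebra_simps power2_eq_square)
    also have "\<dots> = u^2 * nrm d gx gy + tt d * u * gx * (1 - u * gy) + mm d * (1 - u * gy) * (1 + u * gy)"
      by (simp only: vn ng)
    also have "\<dots> = nrm d c 1" by (simp add: nrm_def c_def algebra_simps power2_eq_square)
    finally show ?thesis by simp
  qed
  define P where "P = Lat d n c"
  have I: "is_ideal d P" unfolding P_def by (rule Lat_ideal) (simp add: nk)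
  have cpT: "coprime n (2 * c + tt d)"
  proof (rule coprimeI)
    fix q assume q: "q dvd n" "q dvd 2 * c + tt d"
    have "gy * (2 * c + tt d) - (a - 2 * gx * (v * n)) = 2 * gx * (u * gy + v * n - 1)"
      by (simp add: c_def ab algebra_simps)
    then have "gy * (2 * c + tt d) = a - 2 * gx * (v * n)" using uv by simp
    moreover have "q dvd gy * (2 * c + tt d)" using q(2) by simp
    ultimately have "q dvd a - 2 * gx * (v * n)" by simp
    moreover have "q dvd 2 * gx * (v * n)" using q(1) by simp
    ultimately have "q dvd a" by (metis diff_add_cancel dvd_add)
    then show "is_unit q" using q(1) cna coprime_common_divisor by blast
  qed
  have cop: "coprime_ideals d P (cnj ` P)" unfolding P_def by (rule Lat_coprime[OF cpT])
  have nP: "of_int n \<in> P" unfolding P_def by (rule Lat_e)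
  have gP: "g \<in> P"
  proof -
    have "gx - gy * c - n * (gx * v) = gx * (1 - (u * gy + v * n))" by (simp add: c_def algebra_simps)
    then have "gx - gy * c = n * (gx * v)" using uv by simp
    then show ?thesis unfolding P_def g_def by (simp add: Lat_mem)
  qed
  have beta: "of_int c + ww d = of_int u * g + of_int n * (of_int v * ww d)"
  proof -
    have "of_int u * g + of_int n * (of_int v * ww d) = of_int c + of_int (u * gy + v * n) * ww d"
      by (simp add: g_def emb_def c_def algebra_simps)
    then show ?thesis using uv by simp
  qed
  have Pgen: "\<exists>s t. s \<in> OK d \<and> t \<in> OK d \<and> x = of_int n * s + g * t" if xP: "x \<in> P" for x
  proof -
    obtain i j where x: "x = of_int i * of_int n + of_int j * (of_int c + ww d)"
      using xP unfolding P_def Lat_alt by blast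
    have "x = of_int n * (of_int i + of_int j * (of_int v * ww d)) + g * (of_int j * of_int u)"
      unfolding x beta by (simp add: algebra_simps)
    moreover have "of_int i + of_int j * (of_int v * ww d) \<in> OK d" "of_int j * of_int u \<in> OK d"
      by (intro OK_cl)+
    ultimately show ?thesis by blast
  qed
  have gOK: "g \<in> OK d" by (simp add: g_def)
  have P2: "ideal_mult d P P = pr d g"
  proof
    show "ideal_mult d P P \<subseteq> pr d g"
    proof (rule IM_least[OF pr_ideal[OF gOK]])
      fix x y assume "x \<in> P" "y \<in> P"
      then obtain s t s' t' where st: "s \<in> OK d" "t \<in> OK d" "x = of_int n * s + g * t"
        "s' \<in> OK d" "t' \<in> OK d" "y = of_int n * s' + g * t'"
        using Pgen by meson
      have "x * y = g * (cnj g * s * s' + of_int n * s * t' + of_int n * t * s' + g * t * t')"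
        unfolding st(3,6) using gg by (simp add: algebra_simps)
      moreover have "cnj g * s * s' + of_int n * s * t' + of_int n * t * s' + g * t * t' \<in> OK d"
        using st gOK by (intro OK_cl)
      ultimately show "x * y \<in> pr d g" by (simp add: pr_mem)
    qed
    show "pr d g \<subseteq> ideal_mult d P P"
    proof -
      have IP: "is_ideal d (ideal_mult d P P)" by (rule IM_ideal[OF I I])
      obtain \<sigma> \<tau> where st: "\<sigma> * a + \<tau> * n = 1" using coprime_bez[of a n] cna by (metis coprime_commute)
      have "g * g + of_int n * of_int n - of_int a * g = 0"
        using gg gtr by (simp add: algebra_simps) (metis add.commute mult.commute distrib_right)
      then have ag: "of_int a * g = g * g + of_int n * of_int n" by simp
      have "g = of_int \<sigma> * (g * g + of_int n * of_int n) + of_int \<tau> * (of_int n * g)"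
      proof -
        have "g = (of_int \<sigma> * of_int a + of_int \<tau> * of_int n) * g"
          using arg_cong[OF st, of "of_int :: int \<Rightarrow> complex"] by simp
        also have "\<dots> = of_int \<sigma> * (of_int a * g) + of_int \<tau> * (of_int n * g)" by (simp add: algebra_simps)
        finally show ?thesis by (simp only: ag)
      qed
      moreover have "g * g \<in> ideal_mult d P P" "of_int n * of_int n \<in> ideal_mult d P P"
        "of_int n * g \<in> ideal_mult d P P" using IM_prod gP nP by blast+
      ultimately have "g \<in> ideal_mult d P P"
        using ideal_add[OF IP] ideal_int[OF IP] by metis
      then show ?thesis using ideal_mul'[OF IP] by (auto simp: pr_def)
    qed
  qed
  have n1: "n \<noteq> 1"
  proof
    assume "n = 1"
    then show False using sol_n_ne1[OF a0 b0] eq by simp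
  qed
  have PnO: "P \<noteq> OK d"
  proof
    assume "P = OK d"
    then have "emb d 1 0 \<in> Lat d n c" by (simp add: P_def[symmetric])
    then have "n dvd 1" by (simp add: Lat_mem)
    then show False using n0 n1 by simp
  qed
  have Pnz: "P \<noteq> {0}" using nP n0 by auto
  have "principal d (ideal_mult d P P)" using P2 gOK by (auto simp: principal_def pr_def)
  then have J: "P \<in> Jset d" using I Pnz PnO cop by (simp add: Jset_def)
  have "ideal_norm d P = nat n" unfolding P_def by (rule Lat_norm[OF n0 I[unfolded P_def]])
  moreover have "ab_of d P = (a, b)"
    using ab_of_eq[OF a0] two_sq_pr[OF gOK P2] g2 by simp
  ultimately have "theta d P = (n, a, b)" using n0 by (simp add: theta_def)
  with J show ?thesis by (auto simp: sab)
qed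

end


context qf
begin

lemma theta_bij: "bij_betw (theta d) (Jset d) (primitive_solutions d)"
  unfolding bij_betw_def
proof
  show "inj_on (theta d) (Jset d)" by (rule theta_inj)
  show "theta d ` Jset d = primitive_solutions d"
    using J_forward J_surj by blast
qed

lemma sol_exists: "is_solution d (int (d + 1), 2 * (int d - 1), 4)"
  using d_ge2 by (simp add: is_solution_def power2_eq_square algebra_simps)

lemma sol_reduce:
  assumes sol: "is_solution d (n, a, b)" and g: "gcd n a \<noteq> 1"
  shows "\<exists>n' a' b'. is_solution d (n', a', b') \<and> 0 < n' \<and> n' < n"
proof -
  have n0: "n > 0" and a0: "a > 0" and b0: "b \<noteq> 0" and eq: "4 * n^2 = a^2 + int d * b^2"
    using sol by (auto simp: is_solution_def)
  have "\<not> coprime n a" using g by (simp add: coprime_iff_gcd_eq_1)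
  then obtain q where q: "q dvd n" "q dvd a" "\<not> is_unit q" by (rule not_coprimeE)
  have "q \<noteq> 0" using q(1) n0 by auto
  then obtain p where p: "p dvd q" "prime p" using prime_divisor_exists q(3) by blast
  have pn: "p dvd n" and pa: "p dvd a" using p q dvd_trans by blast+
  have pb: "p dvd b"
  proof (rule ccontr)
    assume npb: "\<not> p dvd b"
    have "p^2 dvd 4 * n^2 - a^2" using pn pa by (simp add: power2_eq_square mult_dvd_mono)
    then have "p^2 dvd int d * b^2" using eq by simp
    moreover have "coprime (p^2) (b^2)" using npb p(2) by (simp add: prime_imp_coprime)
    ultimately have "p^2 dvd int d" by (simp add: coprime_dvd_mult_left_iff)
    then have "\<bar>p\<bar> = 1" using sqf_int[OF sq] by blast
    then show False using p(2) prime_gt_1_int by force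
  qed
  obtain n' where n': "n = p * n'" using pn by (auto elim: dvdE)
  obtain a' where a': "a = p * a'" using pa by (auto elim: dvdE)
  obtain b' where b': "b = p * b'" using pb by (auto elim: dvdE)
  have p0: "p > 1" using p(2) by (simp add: prime_int_iff)
  have "p^2 * (4 * n'^2) = p^2 * (a'^2 + int d * b'^2)"
    using eq by (simp add: n' a' b' power2_eq_square algebra_simps)
  then have eq': "4 * n'^2 = a'^2 + int d * b'^2" using p0 by simp
  have "n' > 0" using n0 p0 n' by (simp add: zero_less_mult_iff)
  moreover have "a' > 0" using a0 p0 a' by (simp add: zero_less_mult_iff)
  moreover have "b' \<noteq> 0" using b0 b' by simp
  moreover have "n' < n" using n' p0 \<open>n' > 0\<close> by (simp add: mult_less_cancel_right1)
  ultimately show ?thesis using eq' by (auto simp: is_solution_def)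
qed

definition n0 where "n0 = (LEAST n::nat. \<exists>a b. is_solution d (int n, a, b))"

lemma n0_sol: "\<exists>a b. is_solution d (int n0, a, b)"
  unfolding n0_def by (rule LeastI_ex) (use sol_exists in blast)

lemma n0_le: "is_solution d (int n, a, b) \<Longrightarrow> n0 \<le> n"
  unfolding n0_def by (rule Least_le) blast

lemma n0_prim: "\<exists>a b. (int n0, a, b) \<in> primitive_solutions d"
proof -
  obtain a b where ab: "is_solution d (int n0, a, b)" using n0_sol by blast
  have "gcd (int n0) a = 1"
  proof (rule ccontr)
    assume "gcd (int n0) a \<noteq> 1"
    then obtain n' a' b' where s: "is_solution d (n', a', b')" "0 < n'" "n' < int n0"
      using sol_reduce[OF ab] by blast
    then have "is_solution d (int (nat n'), a', b')" by simp
    then have "n0 \<le> nat n'" by (rule n0_le)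
    then show False using s by linarith
  qed
  then show ?thesis using ab by (auto simp: primitive_solutions_def)
qed

lemma algebraic_int_root_unity: "k > 0 \<Longrightarrow> (z::complex) ^ k = 1 \<Longrightarrow> algebraic_int z"
  by (rule algebraic_int_root[where p = "monom 1 k" and y = 1])
     (auto simp: poly_monom degree_monom_eq intro: int_imp_algebraic_int)

lemma QF_OK: "x \<in> OK d \<Longrightarrow> x \<in> QF d" by (simp add: OK_def)

lemma QF_div: "x \<in> QF d \<Longrightarrow> x / of_int e \<in> QF d"
proof -
  assume "x \<in> QF d"
  then obtain r1 r2 where r: "x = complex_of_real r1 + complex_of_real r2 * sqm d" "r1 \<in> \<rat>" "r2 \<in> \<rat>"
    by (auto simp: QF_def)
  have "x / of_int e = complex_of_real (r1 / of_int e) + complex_of_real (r2 / of_int e) * sqm d"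
    by (simp add: r add_divide_distrib)
  moreover have "r1 / of_int e \<in> \<rat>" "r2 / of_int e \<in> \<rat>" using r by simp_all
  ultimately show ?thesis unfolding QF_def by blast
qed

lemma Fd_attained: "\<exists>z \<in> K1 d - roots_unity d. dz d z = n0"
proof -
  obtain a b where s: "(int n0, a, b) \<in> primitive_solutions d" using n0_prim by blast
  obtain P where P: "P \<in> Jset d" "theta d P = (int n0, a, b)" using J_surj[OF s] by blast
  obtain g where g: "g \<in> OK d" "ideal_mult d P P = pr d g"
    using P(1) by (auto simp: Jset_def principal_def pr_def)
  obtain e c where ec: "e > 1" "P = Lat d e c" "e dvd nrm d c 1" "g * cnj g = of_int (e^2)"
     "P = {of_int e * s + g * t | s t. s \<in> OK d \<and> t \<in> OK d}"
    using J_facts[OF P(1) g] by blast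
  obtain k where k: "nrm d c 1 = e * k" using ec(3) by (auto elim: dvdE)
  have I: "is_ideal d P" using P(1) by (simp add: Jset_def)
  have cop: "coprime_ideals d P (cnj ` P)" using P(1) by (simp add: Jset_def)
  have nP: "ideal_norm d P = nat e" using Lat_norm[of e c] ec(1,2) I by simp
  have "int (ideal_norm d P) = int n0" using P(2) by (simp add: theta_def)
  then have en: "e = int n0" using nP ec(1) by simp
  define z where "z = cnj g / of_int e"
  have e0: "(of_int e :: complex) \<noteq> 0" using ec(1) by simp
  have gP: "g \<in> P"
  proof -
    have "of_int e * 0 + g * 1 \<in> {of_int e * s + g * t | s t. s \<in> OK d \<and> t \<in> OK d}"
      using OK_0 OK_1 by blast
    then show ?thesis using ec(5) by simp
  qed
  have zQF: "z \<in> QF d" unfolding z_def using g(1) OK_cnj QF_OK QF_div by blast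
  have zK: "z * cnj z = 1"
  proof -
    have "z * cnj z = (g * cnj g) / (of_int e * of_int e)" by (simp add: z_def field_simps)
    also have "\<dots> = 1" using ec(4) e0 by (simp add: power2_eq_square)
    finally show ?thesis .
  qed
  have D: "denom_ideal d z = P"
  proof
    show "P \<subseteq> denom_ideal d z"
    proof
      fix x assume xP: "x \<in> P"
      obtain s where s: "s \<in> OK d" "x * cnj g = of_int e * s"
        using Lat_prod_e[OF _ _ k, of x g] xP gP ec(2) by blast
      have "x * z = s" using s(2) e0 by (simp add: z_def field_simps)
      then show "x \<in> denom_ideal d z" using xP ideal_sub[OF I] s(1) by (auto simp: denom_ideal_def)
    qed
    show "denom_ideal d z \<subseteq> P"
    proof
      fix x assume "x \<in> denom_ideal d z"
      then have xO: "x \<in> OK d" and xz: "x * z \<in> OK d" by (auto simp: denom_ideal_def)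
      obtain u' v' where uv': "u' \<in> P" "v' \<in> P" "1 = u' + cnj v'" using cop_dec[OF cop OK_1] by blast
      obtain s t where st: "s \<in> OK d" "t \<in> OK d" "v' = of_int e * s + g * t" using uv'(2) ec(5) by blast
      have xg: "x * cnj g = of_int e * (x * z)" using e0 by (simp add: z_def field_simps)
      have cv: "cnj v' = of_int e * cnj s + cnj g * cnj t" by (simp add: st)
      have "x * cnj v' = of_int e * (x * cnj s) + (x * cnj g) * cnj t" by (simp add: cv algebra_simps)
      also have "\<dots> = of_int e * (x * cnj s + (x * z) * cnj t)" by (simp only: xg) (simp add: algebra_simps)
      finally have "x * cnj v' = of_int e * (x * cnj s + (x * z) * cnj t)" .
      moreover have "x * cnj s + (x * z) * cnj t \<in> OK d"
        using OK_add[OF OK_mult[OF xO OK_cnj[OF st(1)]] OK_mult[OF xz OK_cnj[OF st(2)]]] .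
      moreover have "of_int e \<in> P" using ec(2) Lat_e by simp
      ultimately have "x * cnj v' \<in> P" using ideal_mul'[OF I] by simp
      moreover have "x * u' \<in> P" using ideal_mul[OF I xO uv'(1)] .
      ultimately have "x * u' + x * cnj v' \<in> P" using ideal_add[OF I] by blast
      then show "x \<in> P" using uv'(3) by (metis distrib_left mult.right_neutral)
    qed
  qed
  have zR: "z \<notin> roots_unity d"
  proof
    assume "z \<in> roots_unity d"
    then obtain m where m: "m > 0" "z ^ m = 1" by (auto simp: roots_unity_def)
    then have "algebraic_int z" by (rule algebraic_int_root_unity)
    then have "z \<in> OK d" using zQF by (simp add: OK_def)
    then have "1 \<in> denom_ideal d z" by (simp add: denom_ideal_def)
    then have "emb d 1 0 \<in> Lat d e c" using D ec(2) by (simp add: emb_1[symmetric])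
    then have "e dvd 1" by (simp add: Lat_mem)
    then show False using ec(1) by simp
  qed
  have "dz d z = n0" using D nP en by (simp add: dz_def)
  moreover have "z \<in> K1 d" using zQF zK by (simp add: K1_def)
  ultimately show ?thesis using zR by blast
qed

lemma sqf_square: "int d * B^2 = C^2 \<Longrightarrow> B \<noteq> 0 \<Longrightarrow> False"
proof -
  assume eq: "int d * B^2 = C^2" and B: "B \<noteq> 0"
  have C: "C \<noteq> 0" using eq B d_pos by auto
  have "of_nat d * (of_int B / of_int C :: rat)^2 = 1"
  proof -
    have "of_nat d * (of_int B / of_int C :: rat)^2 = of_int (int d * B^2) / of_int (C^2)"
      by (simp add: power_divide)
    also have "\<dots> = 1" using eq C by simp
    finally show ?thesis .
  qed
  then have "(of_int B / of_int C :: rat) \<in> \<int>" using sqf_rat[OF sq] by simp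
  then obtain j where j: "(of_int B / of_int C :: rat) = of_int j" by (metis Ints_cases)
  have "of_nat d * (of_int j :: rat)^2 = 1" using \<open>of_nat d * (of_int B / of_int C :: rat)^2 = 1\<close> j by simp
  then have "int d * j^2 = 1" by (metis of_int_1 of_int_eq_iff of_int_mult of_int_of_nat_eq of_int_power)
  then have "int d dvd 1" by (metis dvd_triv_left)
  then show False using d_ge2 by simp
qed

lemma Fd_lower:
  assumes z: "z \<in> K1 d - roots_unity d"
  shows "n0 \<le> dz d z"
proof -
  have zQF: "z \<in> QF d" and zK: "z * cnj z = 1" and zR: "\<not> (\<exists>k>0. z ^ k = 1)"
    using z by (auto simp: K1_def roots_unity_def)
  define D where "D = denom_ideal d z"
  have ID: "is_ideal d D" unfolding is_ideal_def D_def denom_ideal_def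
    by (auto simp: OK_add OK_mult distrib_right mult.assoc)
  obtain r1 r2 where r: "z = complex_of_real r1 + complex_of_real r2 * sqm d" "r1 \<in> \<rat>" "r2 \<in> \<rat>"
    using zQF by (auto simp: QF_def)
  obtain q1 where q1: "r1 = of_rat q1" using r(2) by (auto elim: Rats_cases)
  obtain q2 where q2: "r2 = of_rat q2" using r(3) by (auto elim: Rats_cases)
  obtain a1 b1 where ab1: "q1 = of_int a1 / of_int b1" "b1 > 0"
    by (cases q1) (auto simp: Fract_of_int_quotient)
  obtain a2 b2 where ab2: "q2 = of_int a2 / of_int b2" "b2 > 0"
    by (cases q2) (auto simp: Fract_of_int_quotient)
  define M where "M = 2 * b1 * b2"
  have M0: "M > 0" using ab1 ab2 by (simp add: M_def)
  have zc: "z = of_int a1 / of_int b1 + of_int a2 / of_int b2 * sqm d"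
    using r q1 q2 ab1 ab2 by (simp add: of_rat_complex[symmetric] of_rat_divide)
  have "of_int M * z = (of_int (4 * b2 * a1) + of_int (4 * b1 * a2) * sqm d) / 2"
    using ab1(2) ab2(2) by (simp add: zc M_def field_simps)
  moreover have "4 dvd (4 * b2 * a1)^2 + int d * (4 * b1 * a2)^2" by (simp add: power2_eq_square)
  ultimately have "of_int M * z \<in> OK d" using half_emb[OF sq] by (metis OK_emb)
  then have MD: "of_int M \<in> D" by (simp add: D_def denom_ideal_def)
  have ex: "\<exists>m::nat. m > 0 \<and> of_nat m \<in> D" using MD M0 by (intro exI[of _ "nat M"]) simp
  define m where "m = (LEAST m::nat. m > 0 \<and> of_nat m \<in> D)"
  have m: "m > 0" "of_nat m \<in> D" using LeastI_ex[OF ex] by (simp_all add: m_def)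
  have mleast: "m \<le> k" if "k > 0" "of_nat k \<in> D" for k
    unfolding m_def by (rule Least_le) (use that in blast)
  \<comment> \<open>m is a solution\<close>
  have "of_nat m * z \<in> OK d" using m(2) by (simp add: D_def denom_ideal_def)
  then obtain x y where xy: "of_nat m * z = emb d x y" using OK_iff by blast
  have "emb d x y * cnj (emb d x y) = of_nat m * of_nat m" using zK by (simp flip: xy add: algebra_simps)
  then have "nrm d x y = int m * int m" using emb_norm'[of d x y] by (metis of_int_eq_iff of_int_mult of_int_of_nat_eq)
  then have nm: "4 * (int m)^2 = (2 * x + tt d * y)^2 + int d * (sc d * y)^2"
    using nrm4[of d x y] by (simp add: power2_eq_square algebra_simps)
  have y0: "y \<noteq> 0"
  proof
    assume "y = 0"
    then have "of_nat m * z = of_int x" using xy by (simp add: emb_def)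
    then have "z = of_int x / of_nat m" using m(1) by (simp add: field_simps)
    then have "cnj z = z" by simp
    then have "z ^ 2 = 1" using zK by (simp add: power2_eq_square)
    then have "\<exists>k>0. z ^ k = 1" by (intro exI[of _ 2]) simp
    with zR show False by blast
  qed
  have A0: "2 * x + tt d * y \<noteq> 0"
  proof
    assume "2 * x + tt d * y = 0"
    then have "int d * (sc d * y)^2 = (2 * int m)^2" using nm by (simp add: power2_eq_square)
    then show False using sqf_square y0 sc_pos[of d] by (metis mult_eq_0_iff less_irrefl)
  qed
  have "is_solution d (int m, \<bar>2 * x + tt d * y\<bar>, sc d * y)"
    using m(1) A0 y0 sc_pos[of d] nm by (simp add: is_solution_def)
  then have n0m: "n0 \<le> m" by (rule n0_le)
  \<comment> \<open>m is at most the norm\<close>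
  let ?f = "\<lambda>r::int. cs d D (of_int r)"
  have inj: "inj_on ?f {0..<int m}"
  proof
    fix r r' assume r: "r \<in> {0..<int m}" and r': "r' \<in> {0..<int m}" and eq: "?f r = ?f r'"
    have "of_int r - of_int r' \<in> D" using cs_eqD[OF ID _ eq] by simp
    then have "of_int (r - r') \<in> D" "of_int (r' - r) \<in> D" using ideal_minus[OF ID] by (simp_all, fastforce)
    show "r = r'"
    proof (rule ccontr)
      assume "r \<noteq> r'"
      then have "nat \<bar>r - r'\<bar> > 0" by simp
      moreover have "of_nat (nat \<bar>r - r'\<bar>) \<in> D"
        using \<open>of_int (r - r') \<in> D\<close> \<open>of_int (r' - r) \<in> D\<close> by (cases "r \<ge> r'") simp_all
      ultimately have "m \<le> nat \<bar>r - r'\<bar>" by (rule mleast)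
      then show False using r r' by auto
    qed
  qed
  have fin: "finite (cs d D ` OK d)"
  proof -
    have "cs d D ` OK d \<subseteq> (\<lambda>(x, y). cs d D (emb d x y)) ` ({0..<int m} \<times> {0..<int m})"
    proof
      fix C assume "C \<in> cs d D ` OK d"
      then obtain w where w: "w \<in> OK d" "C = cs d D w" by blast
      from w(1) obtain x y where "w = emb d x y" unfolding OK_iff by blast
      with w(2) have C: "C = cs d D (emb d x y)" by simp
      have "emb d x y - emb d (x mod int m) (y mod int m) = of_nat m * emb d (x div int m) (y div int m)"
        by (simp add: emb_diff emb_smult[where k = "int m", simplified] minus_mod_eq_mult_div[symmetric] mult.commute)
      moreover have "of_nat m * emb d (x div int m) (y div int m) \<in> D" using ideal_mul'[OF ID _ m(2)] by simp
      ultimately have "C = cs d D (emb d (x mod int m) (y mod int m))" using C cs_eq[OF ID] by simp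
      moreover have "(x mod int m, y mod int m) \<in> {0..<int m} \<times> {0..<int m}" using m(1) by simp
      ultimately show "C \<in> (\<lambda>(x, y). cs d D (emb d x y)) ` ({0..<int m} \<times> {0..<int m})" by force
    qed
    then show ?thesis by (rule finite_subset) simp
  qed
  have "?f ` {0..<int m} \<subseteq> cs d D ` OK d" by auto
  then have "card (?f ` {0..<int m}) \<le> card (cs d D ` OK d)" using fin by (rule card_mono[rotated])
  then have "m \<le> ideal_norm d D" using inj by (simp add: ideal_norm_cs card_image)
  then show ?thesis using n0m by (simp add: dz_def D_def)
qed

lemma Fd_eq: "Fd d = n0"
  unfolding Fd_def
proof (rule Least_equality)
  show "\<exists>z\<in>K1 d - roots_unity d. n0 = dz d z" using Fd_attained by metis
  fix m assume "\<exists>z\<in>K1 d - roots_unity d. m = dz d z"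
  then show "n0 \<le> m" using Fd_lower by blast
qed

end

theorem lemma29:
  fixes d :: nat
  assumes "d > 0" and "squarefree d" and "d \<noteq> 1" and "d \<noteq> 3"
  shows "bij_betw (theta d) (Jset d) (primitive_solutions d)
     \<and> Fd d = (LEAST n::nat. \<exists>a b. is_solution d (int n, a, b))"
proof -
  interpret qf d using assms by unfold_locales
  show ?thesis using theta_bij Fd_eq by (simp add: n0_def)
qed


end
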